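(* Let $q_c\in(0,1)$. There exist constants $C^\pm>0$, depending only on $q_c$, with the following property. Let $q\in H^1(\mathbb{R})$ and $p\in H^2(\mathbb{R})$ satisfy $p_y=q$ and $\|q\|_{L^\infty}\le q_c$. Define the increasing bijection $x:\mathbb{R}\to\mathbb{R}$ by $\frac{dx}{dy}=\sqrt{1-q(y)^2}$; equivalently $\frac{dx}{dy}=\cos w$ with $q=\sin w$ and $|w|<\pi/2$, with an arbitrary additive constant. Let $y=y(x)$ be its inverse, and define $u(x):=p(y(x))$. Then \[ C^-\|p\|_{H^2}\le \|u\|_{H^2}\le C^+\|p\|_{H^2}. \]
   Context: In terms of $w$ with $q=\sin w$, this transformation reads $u=w_t=p$, $u_x=\tan w=\frac{p_y}{\sqrt{1-q^2}}$ and $u_{xx}=\frac{p_{yy}}{(1-q^2)^2}$. This is the correspondence between the short-pulse equation $u_{xt}=u+\tfrac16(u^3)_{xx}$ and the sine–Gordon equation $w_{yt}=\sin w$, given by $\partial_y x=\cos w$ and $\partial_t x=-\tfrac12 w_t^2$. *)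

theory Defs
  imports "HOL-Analysis.Analysis"
begin

definition test_fun :: "(real \<Rightarrow> real) \<Rightarrow> bool" where
  "test_fun \<phi> \<longleftrightarrow> (\<forall>k t. ((deriv ^^ k) \<phi>) differentiable (at t))
                   \<and> (\<exists>R. \<forall>t. R < \<bar>t\<bar> \<longrightarrow> \<phi> t = 0)"

definition weak_deriv :: "(real \<Rightarrow> real) \<Rightarrow> (real \<Rightarrow> real) \<Rightarrow> bool" where
  "weak_deriv f g \<longleftrightarrow> (\<forall>\<phi>. test_fun \<phi> \<longrightarrow>
      integrable lborel (\<lambda>t. f t * deriv \<phi> t) \<and> integrable lborel (\<lambda>t. g t * \<phi> t) \<and>
      (\<integral>t. f t * deriv \<phi> t \<partial>lborel) = - (\<integral>t. g t * \<phi> t \<partial>lborel))"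

definition L2 :: "(real \<Rightarrow> real) \<Rightarrow> bool" where
  "L2 f \<longleftrightarrow> f \<in> borel_measurable lborel \<and> integrable lborel (\<lambda>t. (f t)\<^sup>2)"

definition H1 :: "(real \<Rightarrow> real) \<Rightarrow> bool" where
  "H1 f \<longleftrightarrow> L2 f \<and> (\<exists>g. L2 g \<and> weak_deriv f g)"

definition H2_witness :: "(real \<Rightarrow> real) \<Rightarrow> (real \<Rightarrow> real) \<Rightarrow> (real \<Rightarrow> real) \<Rightarrow> bool" where
  "H2_witness f g h \<longleftrightarrow> L2 f \<and> L2 g \<and> L2 h \<and> weak_deriv f g \<and> weak_deriv g h"

definition H2 :: "(real \<Rightarrow> real) \<Rightarrow> bool" where
  "H2 f \<longleftrightarrow> (\<exists>g h. H2_witness f g h)"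

text \<open>H^2 norm: sqrt of sum of squared L^2 norms of f, f', f'' (weak derivatives,
  unique a.e., so the choice does not matter).\<close>
definition H2_norm :: "(real \<Rightarrow> real) \<Rightarrow> real" where
  "H2_norm f = (let (g, h) = (SOME (g, h). H2_witness f g h) in
     sqrt ((\<integral>t. (f t)\<^sup>2 \<partial>lborel) + (\<integral>t. (g t)\<^sup>2 \<partial>lborel) + (\<integral>t. (h t)\<^sup>2 \<partial>lborel)))"

end

theory Submission
  imports Defs
begin


fun ks :: "nat \<Rightarrow> (real \<Rightarrow> real) \<Rightarrow> bool" where
  "ks 0 f = (\<forall>t. f differentiable (at t))"
| "ks (Suc k) f = ((\<forall>t. f differentiable (at t)) \<and> ks k (deriv f))"

definition smooth :: "(real \<Rightarrow> real) \<Rightarrow> bool" where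
  "smooth f \<longleftrightarrow> (\<forall>k. ks k f)"

lemma ks_iff: "ks k f \<longleftrightarrow> (\<forall>j\<le>k. \<forall>t. (deriv ^^ j) f differentiable (at t))"
proof (induction k arbitrary: f)
  case 0 then show ?case by simp
next
  case (Suc k)
  have "(\<forall>j\<le>Suc k. \<forall>t. (deriv ^^ j) f differentiable (at t)) \<longleftrightarrow>
        (\<forall>t. f differentiable (at t)) \<and> (\<forall>j\<le>k. \<forall>t. (deriv ^^ j) (deriv f) differentiable (at t))"
    (is "?L \<longleftrightarrow> ?R")
  proof
    assume L: ?L
    show ?R
    proof (intro conjI allI impI)
      fix t show "f differentiable (at t)" using L[rule_format, of 0] by simp
    next
      fix j t assume "j \<le> k"
      then show "(deriv ^^ j) (deriv f) differentiable (at t)"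
        using L[rule_format, of "Suc j"] by (simp add: funpow_Suc_right del: funpow.simps)
    qed
  next
    assume R: ?R
    show ?L
    proof (intro allI impI)
      fix j t assume j: "j \<le> Suc k"
      show "(deriv ^^ j) f differentiable (at t)"
      proof (cases j)
        case 0 then show ?thesis using R by simp
      next
        case (Suc j')
        then show ?thesis using R j by (simp add: funpow_Suc_right del: funpow.simps)
      qed
    qed
  qed
  then show ?case using Suc.IH by simp
qed

lemma test_fun_iff: "test_fun \<phi> \<longleftrightarrow> smooth \<phi> \<and> (\<exists>R. \<forall>t. R < \<bar>t\<bar> \<longrightarrow> \<phi> t = 0)"
  unfolding test_fun_def smooth_def ks_iff by blast

lemma ks_diff: "ks k f \<Longrightarrow> f differentiable (at t)"
  by (cases k) auto

lemma ks_deriv_eq: "f differentiable (at t) \<Longrightarrow> (f has_real_derivative deriv f t) (at t)"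
  using DERIV_deriv_iff_real_differentiable by blast

lemma ks_mono: "ks (Suc k) f \<Longrightarrow> ks k f"
proof (induction k arbitrary: f)
  case 0 then show ?case by simp
next
  case (Suc k) then show ?case by simp
qed

lemma ks_le: "ks k f \<Longrightarrow> j \<le> k \<Longrightarrow> ks j f"
proof (induction k)
  case 0 then show ?case by simp
next
  case (Suc k) then show ?case using ks_mono by (metis le_Suc_eq)
qed

lemma ks_const: "ks k (\<lambda>t. c)"
proof (induction k arbitrary: c)
  case 0 then show ?case by simp
next
  case (Suc k)
  have "deriv (\<lambda>t. c) = (\<lambda>t. 0)" by (rule ext) simp
  then show ?case using Suc by simp
qed

lemma ks_add: "ks k f \<Longrightarrow> ks k g \<Longrightarrow> ks k (\<lambda>t. f t + g t)"
proof (induction k arbitrary: f g)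
  case 0 then show ?case by auto
next
  case (Suc k)
  have df: "\<And>t. f differentiable (at t)" and dg: "\<And>t. g differentiable (at t)" using Suc.prems by auto
  have "deriv (\<lambda>t. f t + g t) = (\<lambda>t. deriv f t + deriv g t)"
    by (rule ext, rule DERIV_imp_deriv, intro DERIV_add ks_deriv_eq df dg)
  then show ?case using Suc df dg by auto
qed

lemma ks_cmult: "ks k f \<Longrightarrow> ks k (\<lambda>t. c * f t)"
proof (induction k arbitrary: f)
  case 0 then show ?case by auto
next
  case (Suc k)
  have df: "\<And>t. f differentiable (at t)" using Suc.prems by auto
  have "deriv (\<lambda>t. c * f t) = (\<lambda>t. c * deriv f t)"
    by (rule ext, rule DERIV_imp_deriv, intro DERIV_cmult ks_deriv_eq df)
  then show ?case using Suc df by auto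
qed

lemma ks_diff': "ks k f \<Longrightarrow> ks k g \<Longrightarrow> ks k (\<lambda>t. f t - g t)"
  using ks_add[of k f "\<lambda>t. (-1) * g t"] ks_cmult[of k g "-1"] by simp

lemma ks_mult: "ks k f \<Longrightarrow> ks k g \<Longrightarrow> ks k (\<lambda>t. f t * g t)"
proof (induction k arbitrary: f g)
  case 0 then show ?case by auto
next
  case (Suc k)
  have df: "\<And>t. f differentiable (at t)" and dg: "\<And>t. g differentiable (at t)" using Suc.prems by auto
  have "((\<lambda>t. f t * g t) has_real_derivative deriv f t * g t + f t * deriv g t) (at t)" for t
    using DERIV_mult[OF ks_deriv_eq[OF df] ks_deriv_eq[OF dg]] by (simp add: mult.commute)
  then have "deriv (\<lambda>t. f t * g t) = (\<lambda>t. deriv f t * g t + f t * deriv g t)"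
    by (intro ext DERIV_imp_deriv)
  moreover have "ks k (\<lambda>t. deriv f t * g t + f t * deriv g t)"
    using Suc by (intro ks_add Suc.IH) (auto intro: ks_mono)
  ultimately show ?case using df dg by auto
qed

lemma ks_affine: "ks k f \<Longrightarrow> ks k (\<lambda>t. f (a * t + b))"
proof (induction k arbitrary: f)
  case 0
  have df: "\<And>t. f differentiable (at t)" using 0 by auto
  have D: "((\<lambda>t. f (a * t + b)) has_real_derivative deriv f (a*t+b) * a) (at t)" for t
  proof -
    have "((\<lambda>t. a*t+b) has_real_derivative a) (at t)" by (auto intro!: derivative_eq_intros)
    from DERIV_chain2[OF ks_deriv_eq[OF df] this] show ?thesis by simp
  qed
  then show ?case using real_differentiable_def by auto
next
  case (Suc k)
  have df: "\<And>t. f differentiable (at t)" using Suc.prems by auto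
  have D: "((\<lambda>t. f (a * t + b)) has_real_derivative deriv f (a*t+b) * a) (at t)" for t
  proof -
    have "((\<lambda>t. a*t+b) has_real_derivative a) (at t)" by (auto intro!: derivative_eq_intros)
    from DERIV_chain2[OF ks_deriv_eq[OF df] this] show ?thesis by simp
  qed
  have "deriv (\<lambda>t. f (a * t + b)) = (\<lambda>t. a * deriv f (a*t+b))"
    by (rule ext, rule DERIV_imp_deriv) (use D in \<open>simp add: mult.commute\<close>)
  moreover have "ks k (\<lambda>t. a * deriv f (a*t+b))"
    using Suc by (intro ks_cmult Suc.IH) auto
  ultimately show ?case using D real_differentiable_def by auto
qed

lemma ks_prim: "(\<And>t. (F has_real_derivative f t) (at t)) \<Longrightarrow> ks k f \<Longrightarrow> ks (Suc k) F"
proof -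
  assume D: "\<And>t. (F has_real_derivative f t) (at t)" and k: "ks k f"
  have "deriv F = f" by (rule ext, rule DERIV_imp_deriv, rule D)
  then show ?thesis using D k real_differentiable_def by auto
qed

lemma smooth_prim: "(\<And>t. (F has_real_derivative f t) (at t)) \<Longrightarrow> smooth f \<Longrightarrow> smooth F"
  unfolding smooth_def by (metis ks_prim ks_mono)

lemma smooth_add: "smooth f \<Longrightarrow> smooth g \<Longrightarrow> smooth (\<lambda>t. f t + g t)"
  and smooth_diff: "smooth f \<Longrightarrow> smooth g \<Longrightarrow> smooth (\<lambda>t. f t - g t)"
  and smooth_mult: "smooth f \<Longrightarrow> smooth g \<Longrightarrow> smooth (\<lambda>t. f t * g t)"
  and smooth_cmult: "smooth f \<Longrightarrow> smooth (\<lambda>t. c * f t)"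
  and smooth_affine: "smooth f \<Longrightarrow> smooth (\<lambda>t. f (a * t + b))"
  and smooth_const: "smooth (\<lambda>t. c)"
  unfolding smooth_def by (auto intro: ks_add ks_diff' ks_mult ks_cmult ks_affine ks_const)

lemma smooth_differentiable: "smooth f \<Longrightarrow> f differentiable (at t)"
  unfolding smooth_def using ks_diff by blast

lemma smooth_deriv: "smooth f \<Longrightarrow> smooth (deriv f)"
  unfolding smooth_def by (metis ks.simps(2))

lemma smooth_has_deriv: "smooth f \<Longrightarrow> (f has_real_derivative deriv f t) (at t)"
  using smooth_differentiable ks_deriv_eq by blast

lemma smooth_cont: "smooth f \<Longrightarrow> continuous_on A f"
  by (meson continuous_at_imp_continuous_on differentiable_imp_continuous_within smooth_differentiable)

lemma smooth_isCont: "smooth f \<Longrightarrow> isCont f t"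
  by (simp add: differentiable_imp_continuous_within smooth_differentiable)

subsection \<open>exp(-1/t)\<close>

lemma polyexp_lim: "((\<lambda>u::real. poly Q u * exp (- u)) \<longlongrightarrow> 0) at_top"
proof -
  have eq: "poly Q u * exp (- u) = (\<Sum>i\<le>degree Q. coeff Q i * (u ^ i / exp u))" for u
    by (simp add: poly_altdef exp_minus divide_inverse sum_distrib_right mult.assoc)
  show ?thesis unfolding eq
    by (intro tendsto_null_sum tendsto_mult_right_zero tendsto_power_div_exp_0)
qed

definition EP :: "real poly \<Rightarrow> real \<Rightarrow> real" where
  "EP P t = (if 0 < t then poly P (inverse t) * exp (- inverse t) else 0)"

definition nxt :: "real poly \<Rightarrow> real poly" where
  "nxt P = monom 1 2 * (P - pderiv P)"

lemma EP_lim0: "((\<lambda>h::real. poly Q (inverse h) * exp (- inverse h)) \<longlongrightarrow> 0) (at_right 0)"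
  using filterlim_compose[of "\<lambda>u. poly Q u * exp (-u)" "nhds 0" at_top inverse "at_right 0",
     OF polyexp_lim filterlim_inverse_at_top_right] by simp

lemma EP_deriv: "(EP P has_real_derivative EP (nxt P) t) (at t)"
proof -
  consider "t > 0" | "t < 0" | "t = 0" by linarith
  then show ?thesis
  proof cases
    case 1
    let ?g = "\<lambda>t. poly P (inverse t) * exp (- inverse t)"
    have "(?g has_real_derivative
           (poly (pderiv P) (inverse t) * (- (inverse t ^ 2))) * exp (- inverse t) +
            poly P (inverse t) * (exp (- inverse t) * (inverse t ^ 2))) (at t)"
      using 1
      by (auto intro!: derivative_eq_intros DERIV_chain2[OF poly_DERIV]
           simp: power2_eq_square field_simps)
    moreover have "(poly (pderiv P) (inverse t) * (- (inverse t ^ 2))) * exp (- inverse t) +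
            poly P (inverse t) * (exp (- inverse t) * (inverse t ^ 2)) = EP (nxt P) t"
      using 1 by (simp add: EP_def nxt_def poly_monom algebra_simps)
    ultimately have "(?g has_real_derivative EP (nxt P) t) (at t)" by simp
    then show ?thesis
      by (rule has_field_derivative_transform_within_open[of _ _ _ "{0<..}"])
         (use 1 in \<open>auto simp: EP_def\<close>)
  next
    case 2
    have "((\<lambda>t. 0) has_real_derivative 0) (at t)" by simp
    then have "((\<lambda>t. 0) has_real_derivative EP (nxt P) t) (at t)" using 2 by (simp add: EP_def)
    then show ?thesis
      by (rule has_field_derivative_transform_within_open[of _ _ _ "{..<0}"])
         (use 2 in \<open>auto simp: EP_def\<close>)
  next
    case 3
    have R: "((\<lambda>h. (EP P (0 + h) - EP P 0) / h) \<longlongrightarrow> 0) (at_right 0)"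
    proof -
      have "((\<lambda>h. poly (pCons 0 P) (inverse h) * exp (- inverse h)) \<longlongrightarrow> 0) (at_right 0)"
        by (rule EP_lim0)
      then show ?thesis
        by (rule Lim_transform_eventually)
           (auto simp: eventually_at_right_field EP_def field_simps intro!: exI[of _ 1])
    qed
    have L: "((\<lambda>h. (EP P (0 + h) - EP P 0) / h) \<longlongrightarrow> 0) (at_left 0)"
    proof -
      have "((\<lambda>h. 0::real) \<longlongrightarrow> 0) (at_left 0)" by simp
      then show ?thesis
        by (rule Lim_transform_eventually)
           (auto simp: eventually_at_left_field EP_def intro!: exI[of _ "-1"])
    qed
    have "((\<lambda>h. (EP P (0 + h) - EP P 0) / h) \<longlongrightarrow> 0) (at 0)"
      using L R by (simp add: filterlim_split_at)
    then show ?thesis using 3 by (simp add: DERIV_def EP_def)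
  qed
qed

lemma EP_smooth: "smooth (EP P)"
proof -
  have "ks k (EP P)" for k
  proof (induction k arbitrary: P)
    case 0 then show ?case using EP_deriv real_differentiable_def by auto
  next
    case (Suc k)
    have "deriv (EP P) = EP (nxt P)" by (rule ext, rule DERIV_imp_deriv, rule EP_deriv)
    then show ?case using Suc EP_deriv real_differentiable_def by auto
  qed
  then show ?thesis by (simp add: smooth_def)
qed

definition bump :: "real \<Rightarrow> real" where
  "bump t = EP 1 t * EP 1 (1 - t)"

lemma bump_smooth: "smooth bump"
proof -
  have "smooth (\<lambda>t. EP 1 ((-1) * t + 1))" by (rule smooth_affine[OF EP_smooth])
  then show ?thesis unfolding bump_def
    using smooth_mult[OF EP_smooth] by simp
qed

lemma bump_nonneg: "bump t \<ge> 0"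
  by (simp add: bump_def EP_def)

lemma bump_zero: "t \<le> 0 \<or> 1 \<le> t \<Longrightarrow> bump t = 0"
  by (auto simp: bump_def EP_def)

lemma bump_pos: "0 < t \<Longrightarrow> t < 1 \<Longrightarrow> bump t > 0"
  by (simp add: bump_def EP_def)




definition loc :: "(real \<Rightarrow> real) \<Rightarrow> bool" where
  "loc h \<longleftrightarrow> h \<in> borel_measurable lborel \<and> (\<forall>a b. set_integrable lborel {a..b} h)"

lemma L2_loc: "L2 h \<Longrightarrow> loc h"
proof -
  assume "L2 h"
  then have m: "h \<in> borel_measurable lborel" and i: "integrable lborel (\<lambda>t. (h t)\<^sup>2)"
    by (auto simp: L2_def)
  have "set_integrable lborel {a..b} h" for a b
    unfolding set_integrable_def
  proof (rule Bochner_Integration.integrable_bound)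
    have "integrable lborel (\<lambda>x. indicator {a..b} x *\<^sub>R (1::real))"
      by (rule borel_integrable_compact) auto
    then show "integrable lborel (\<lambda>t. indicator {a..b} t + (h t)\<^sup>2 :: real)"
      using i by (intro Bochner_Integration.integrable_add) auto
    show "(\<lambda>x. indicat_real {a..b} x *\<^sub>R h x) \<in> borel_measurable lborel" using m by measurable
    show "AE x in lborel. norm (indicat_real {a..b} x *\<^sub>R h x) \<le> norm (indicat_real {a..b} x + (h x)\<^sup>2)"
    proof (rule AE_I2)
      fix x
      have "\<bar>h x\<bar> \<le> 1 + \<bar>h x\<bar> * \<bar>h x\<bar>"
      proof (cases "\<bar>h x\<bar> \<le> 1")
        case True then show ?thesis by (simp add: add_increasing2)
      next
        case False
        then have "\<bar>h x\<bar> * 1 \<le> \<bar>h x\<bar> * \<bar>h x\<bar>" by (intro mult_left_mono) auto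
        then show ?thesis by simp
      qed
      then have "\<bar>h x\<bar> \<le> 1 + (h x)\<^sup>2" by (simp add: power2_eq_square abs_mult_self_eq)
      then show "norm (indicat_real {a..b} x *\<^sub>R h x) \<le> norm (indicat_real {a..b} x + (h x)\<^sup>2)"
        by (auto simp: indicator_def)
    qed
  qed
  then show ?thesis using m by (simp add: loc_def)
qed

lemma cont_supp_integrable:
  fixes f :: "real \<Rightarrow> real"
  assumes c: "\<And>t. isCont f t" and s: "\<And>t. R < \<bar>t\<bar> \<Longrightarrow> f t = 0"
  shows "integrable lborel f"
proof -
  have "integrable lborel (\<lambda>x. indicator {-R..R} x *\<^sub>R f x)"
    by (rule borel_integrable_compact) (auto intro: continuous_at_imp_continuous_on c)
  moreover have "(\<lambda>x. indicator {-R..R} x *\<^sub>R f x) = f"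
  proof (rule ext)
    fix x show "indicator {-R..R} x *\<^sub>R f x = f x"
    proof (cases "\<bar>x\<bar> \<le> R")
      case True then show ?thesis by (simp add: indicator_def abs_le_iff)
    next
      case False then show ?thesis using s[of x] by simp
    qed
  qed
  ultimately show ?thesis by simp
qed

lemma bounded_supp_on:
  fixes f :: "real \<Rightarrow> real"
  assumes c: "\<And>t. isCont f t"
  obtains M where "\<And>t. \<bar>t\<bar> \<le> R \<Longrightarrow> \<bar>f t\<bar> \<le> M"
proof -
  have "compact (f ` {-R..R})"
    by (rule compact_continuous_image) (auto intro: continuous_at_imp_continuous_on c)
  then obtain M where M: "\<forall>y\<in>f ` {-R..R}. norm y \<le> M"
    by (meson bounded_iff compact_imp_bounded)
  show ?thesis
  proof (rule that)
    fix t :: real assume "\<bar>t\<bar> \<le> R"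
    then have "t \<in> {-R..R}" by auto
    then show "\<bar>f t\<bar> \<le> M" using M by auto
  qed
qed

lemma loc_mult:
  assumes h: "loc h" and c: "\<And>t. isCont f t" and s: "\<And>t. R < \<bar>t\<bar> \<Longrightarrow> f t = 0"
  shows "integrable lborel (\<lambda>t. h t * f t)"
proof -
  obtain M where M: "\<And>t. \<bar>t\<bar> \<le> R \<Longrightarrow> \<bar>f t\<bar> \<le> M" using bounded_supp_on[OF c] by blast
  have hi: "set_integrable lborel {-R..R} h" and hm: "h \<in> borel_measurable lborel"
    using h by (auto simp: loc_def)
  have "f \<in> borel_measurable borel"
    by (rule borel_measurable_continuous_onI) (simp add: continuous_at_imp_continuous_on c)
  then have fm: "f \<in> borel_measurable lborel" by simp
  show ?thesis
  proof (rule Bochner_Integration.integrable_bound)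
    show "integrable lborel (\<lambda>t. M * norm (indicat_real {-R..R} t *\<^sub>R h t))"
      using hi unfolding set_integrable_def by (intro integrable_mult_right integrable_norm)
    show "(\<lambda>t. h t * f t) \<in> borel_measurable lborel" using hm fm by measurable
    show "AE x in lborel. norm (h x * f x) \<le> norm (M * norm (indicat_real {-R..R} x *\<^sub>R h x))"
    proof (rule AE_I2)
      fix x
      show "norm (h x * f x) \<le> norm (M * norm (indicat_real {-R..R} x *\<^sub>R h x))"
      proof (cases "\<bar>x\<bar> \<le> R")
        case True
        then have "\<bar>f x\<bar> \<le> M" using M by blast
        then show ?thesis using True
          by (auto simp: indicator_def abs_mult mult.commute intro: mult_right_mono)
      next
        case False then show ?thesis using s by auto
      qed
    qed
  qed
qed

lemma supp_integral_eq:
  fixes f :: "real \<Rightarrow> real"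
  assumes s: "\<And>t. R < \<bar>t\<bar> \<Longrightarrow> f t = 0" and "a \<le> -R" "R \<le> b" "a \<le> b"
  shows "(LBINT t=a..b. f t) = (\<integral>t. f t \<partial>lborel)"
proof -
  have "(LBINT t=a..b. f t) = (LBINT t:{a..b}. f t)"
    using assms by (intro interval_integral_Icc) (auto simp: abs_if)
  also have "\<dots> = (\<integral>t. f t \<partial>lborel)"
    unfolding set_lebesgue_integral_def
  proof (rule Bochner_Integration.integral_cong)
    fix x show "indicat_real {a..b} x *\<^sub>R f x = f x"
    proof (cases "x \<in> {a..b}")
      case True then show ?thesis by simp
    next
      case False then have "R < \<bar>x\<bar>" using assms by auto
      then show ?thesis using s False by simp
    qed
  qed simp
  finally show ?thesis .
qed

lemma prim_deriv:
  fixes f :: "real \<Rightarrow> real" and c0 :: real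
  assumes c: "\<And>t. isCont f t"
  shows "((\<lambda>u. LBINT s=c0..u. f s) has_real_derivative f t) (at t)"
proof -
  let ?a = "min c0 t - 1" and ?b = "max c0 t + 1"
  have "((\<lambda>u. LBINT s=c0..u. f s) has_vector_derivative f t) (at t within {?a..?b})"
    by (rule interval_integral_FTC2) (auto intro: continuous_at_imp_continuous_on c)
  moreover have "at t within {?a..?b} = at t"
    by (rule at_within_interior) (auto simp: interior_atLeastAtMost_real)
  ultimately show ?thesis by (simp add: has_real_derivative_iff_has_vector_derivative)
qed

lemma deriv_supp:
  fixes f :: "real \<Rightarrow> real"
  assumes s: "\<And>t. R < \<bar>t\<bar> \<Longrightarrow> f t = 0" and "R < \<bar>t\<bar>"
  shows "deriv f t = 0"
proof (rule DERIV_imp_deriv)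
  show "(f has_real_derivative 0) (at t)"
  proof (cases "t > 0")
    case True
    have "((\<lambda>t. 0) has_real_derivative 0) (at t)" by simp
    then show ?thesis
      by (rule has_field_derivative_transform_within_open[of _ _ _ "{R<..}"])
         (use assms True in \<open>auto simp: abs_if split: if_splits\<close>)
  next
    case False
    have "((\<lambda>t. 0) has_real_derivative 0) (at t)" by simp
    then show ?thesis
      by (rule has_field_derivative_transform_within_open[of _ _ _ "{..< -R}"])
         (use assms False in \<open>auto simp: abs_if split: if_splits\<close>)
  qed
qed

lemma test_deriv: "test_fun \<phi> \<Longrightarrow> test_fun (deriv \<phi>)"
  unfolding test_fun_iff by (metis smooth_deriv deriv_supp)

lemma test_cont: "test_fun \<phi> \<Longrightarrow> isCont \<phi> t"
  unfolding test_fun_iff by (simp add: smooth_isCont)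

lemma test_integrable: "test_fun \<phi> \<Longrightarrow> integrable lborel \<phi>"
  unfolding test_fun_iff by (metis cont_supp_integrable smooth_isCont)

lemma loc_mult_test: "loc h \<Longrightarrow> test_fun \<phi> \<Longrightarrow> integrable lborel (\<lambda>t. h t * \<phi> t)"
  unfolding test_fun_iff by (metis loc_mult smooth_isCont)

subsection \<open>Normalized bump and step\<close>

definition cB :: real where "cB = (\<integral>t. bump t \<partial>lborel)"

lemma bump_integrable: "integrable lborel bump"
  by (rule cont_supp_integrable[of _ 1]) (auto intro: smooth_isCont[OF bump_smooth] bump_zero)

lemma cB_pos: "cB > 0"
proof -
  have nn: "cB \<ge> 0" unfolding cB_def by (simp add: bump_nonneg)
  have "cB \<noteq> 0"
  proof
    assume "cB = 0"
    then have "AE x in lborel. bump x = 0"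
      using integral_nonneg_eq_0_iff_AE[OF bump_integrable] bump_nonneg unfolding cB_def by simp
    then have "AE x in lborel. x \<notin> {0<..<1::real}"
      by eventually_elim (metis bump_pos greaterThanLessThan_iff less_irrefl)
    then have "emeasure lborel {0<..<1::real} = 0"
      by (subst (asm) AE_iff_measurable[of "{0<..<1}" lborel]) auto
    then show False by simp
  qed
  with nn show ?thesis by simp
qed

definition B0 :: "real \<Rightarrow> real" where "B0 t = bump t / cB"

lemma B0_smooth: "smooth B0"
  unfolding B0_def using smooth_cmult[OF bump_smooth, of "inverse cB"]
  by (simp add: divide_inverse mult.commute)

lemma B0_nonneg: "B0 t \<ge> 0" using cB_pos bump_nonneg by (simp add: B0_def)
lemma B0_zero: "t \<le> 0 \<or> 1 \<le> t \<Longrightarrow> B0 t = 0" by (simp add: B0_def bump_zero)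
lemma B0_supp: "1 < \<bar>t\<bar> \<Longrightarrow> B0 t = 0" by (rule B0_zero) (auto simp: abs_if split: if_splits)
lemma B0_test: "test_fun B0" unfolding test_fun_iff using B0_smooth B0_supp by blast
lemma B0_int: "(\<integral>t. B0 t \<partial>lborel) = 1"
  using cB_pos unfolding B0_def cB_def by simp

definition S :: "real \<Rightarrow> real" where "S t = (LBINT s=0..t. B0 s)"

lemma S_deriv: "(S has_real_derivative B0 t) (at t)"
  using prim_deriv[of B0 0 t] smooth_isCont[OF B0_smooth] unfolding S_def[abs_def] by (simp add: zero_ereal_def)

lemma S_smooth: "smooth S"
  by (rule smooth_prim[OF S_deriv B0_smooth])

lemma S_mono: "a \<le> b \<Longrightarrow> S a \<le> S b"
  by (rule DERIV_nonneg_imp_nondecreasing) (use S_deriv B0_nonneg in blast)+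

lemma S_zero: "t \<le> 0 \<Longrightarrow> S t = 0"
proof -
  assume "t \<le> 0"
  then have "(LBINT s=0..t. B0 s) = (LBINT s=0..t. 0)"
    by (intro interval_integral_cong) (auto simp: B0_zero einterval_iff zero_ereal_def)
  then show ?thesis by (simp add: S_def)
qed

lemma S_one: "1 \<le> t \<Longrightarrow> S t = 1"
proof -
  assume "1 \<le> t"
  have "(LBINT s=0..t. B0 s) = (\<integral>s. B0 s \<partial>lborel)"
  proof -
    have "(LBINT s=0..t. B0 s) = (LBINT s:{0..t}. B0 s)"
      using \<open>1 \<le> t\<close> interval_integral_Icc[of 0 t B0] by (simp add: zero_ereal_def)
    also have "\<dots> = (\<integral>s. B0 s \<partial>lborel)"
      unfolding set_lebesgue_integral_def
    proof (rule Bochner_Integration.integral_cong)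
      fix x
      have nz: "B0 x \<noteq> 0 \<Longrightarrow> 0 < x \<and> x < 1" using B0_zero[of x] by force
      show "indicat_real {0..t} x *\<^sub>R B0 x = B0 x"
        using nz \<open>1 \<le> t\<close> by (cases "B0 x = 0") (auto simp: indicator_def)
    qed simp
    finally show ?thesis .
  qed
  then show ?thesis by (simp add: S_def B0_int)
qed

lemma S_bounds: "0 \<le> S t" "S t \<le> 1"
proof -
  show "0 \<le> S t"
    by (cases "t \<le> 0") (auto simp: S_zero intro: order.trans[OF _ S_mono[of 0 t]])
  show "S t \<le> 1"
    by (cases "1 \<le> t") (auto simp: S_one intro: order.trans[OF S_mono[of t 1]])
qed




lemma test_supp: "test_fun \<phi> \<Longrightarrow> \<exists>R\<ge>0. \<forall>t. R < \<bar>t\<bar> \<longrightarrow> \<phi> t = 0"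
  unfolding test_fun_def by (metis abs_ge_zero le_less_trans max.cobounded1 max.cobounded2 not_le)

lemma test_funI: "smooth \<phi> \<Longrightarrow> (\<And>t. R < \<bar>t\<bar> \<Longrightarrow> \<phi> t = 0) \<Longrightarrow> test_fun \<phi>"
  unfolding test_fun_iff by blast

lemma test_lin: "test_fun \<phi> \<Longrightarrow> test_fun \<psi> \<Longrightarrow> test_fun (\<lambda>t. \<phi> t - c * \<psi> t)"
proof -
  assume a: "test_fun \<phi>" "test_fun \<psi>"
  obtain R1 where R1: "\<forall>t. R1 < \<bar>t\<bar> \<longrightarrow> \<phi> t = 0" using a test_supp by blast
  obtain R2 where R2: "\<forall>t. R2 < \<bar>t\<bar> \<longrightarrow> \<psi> t = 0" using a test_supp by blast
  show ?thesis
  proof (rule test_funI)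
    show "smooth (\<lambda>t. \<phi> t - c * \<psi> t)" using a unfolding test_fun_iff
      by (intro smooth_diff smooth_cmult) auto
    fix t assume "max R1 R2 < \<bar>t\<bar>" then show "\<phi> t - c * \<psi> t = 0" using R1 R2 by auto
  qed
qed

lemma prim_test:
  assumes t: "test_fun \<psi>" and z: "(\<integral>t. \<psi> t \<partial>lborel) = 0"
  shows "\<exists>\<Phi>. test_fun \<Phi> \<and> (\<forall>t. deriv \<Phi> t = \<psi> t)"
proof -
  obtain R where R0: "R \<ge> 0" and R: "\<And>t. R < \<bar>t\<bar> \<Longrightarrow> \<psi> t = 0" using test_supp[OF t] by blast
  define L where "L = - R - 1"
  define \<Phi> where "\<Phi> u = (LBINT s=L..u. \<psi> s)" for u
  have D: "(\<Phi> has_real_derivative \<psi> u) (at u)" for u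
    unfolding \<Phi>_def[abs_def] by (rule prim_deriv) (rule test_cont[OF t])
  have sm: "smooth \<Phi>"
    by (rule smooth_prim[OF D]) (use t in \<open>simp add: test_fun_iff\<close>)
  have supp: "\<Phi> u = 0" if "R + 1 < \<bar>u\<bar>" for u
  proof (cases "u < 0")
    case True
    then have "u < L" using that by (auto simp: L_def)
    then have "(LBINT s=L..u. \<psi> s) = (LBINT s=L..u. 0)"
      by (intro interval_integral_cong) (auto simp: einterval_iff L_def intro!: R)
    then show ?thesis by (simp add: \<Phi>_def)
  next
    case False
    then have "\<Phi> u = (\<integral>t. \<psi> t \<partial>lborel)" unfolding \<Phi>_def
      using that R0 by (intro supp_integral_eq[of R]) (auto simp: L_def R)
    then show ?thesis using z by simp
  qed
  have "test_fun \<Phi>" by (rule test_funI[OF sm supp])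
  moreover have "deriv \<Phi> t = \<psi> t" for t by (rule DERIV_imp_deriv[OF D])
  ultimately show ?thesis by blast
qed

subsection \<open>Approximate indicators\<close>

definition psi :: "real \<Rightarrow> real \<Rightarrow> real \<Rightarrow> real \<Rightarrow> real" where
  "psi a b n t = S (n * (t - a)) - S (n * (t - b))"

lemma psi_smooth: "smooth (psi a b n)"
proof -
  have 1: "smooth (\<lambda>t. S (n * t + (- n * a)))" by (rule smooth_affine[OF S_smooth])
  have 2: "smooth (\<lambda>t. S (n * t + (- n * b)))" by (rule smooth_affine[OF S_smooth])
  show ?thesis using smooth_diff[OF 1 2] unfolding psi_def[abs_def] by (simp add: algebra_simps)
qed

lemma psi_zero:
  assumes "a \<le> b" "1 \<le> n" "t \<le> a \<or> b + 1 \<le> t"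
  shows "psi a b n t = 0"
proof (cases "t \<le> a")
  case True
  then have "n * (t - a) \<le> 0" "n * (t - b) \<le> 0" using assms
    by (auto intro: mult_nonneg_nonpos)
  then show ?thesis by (simp add: psi_def S_zero)
next
  case False
  then have t: "b + 1 \<le> t" using assms by auto
  have "1 \<le> n * (t - b)"
  proof -
    have "1 * 1 \<le> n * (t - b)" using assms t by (intro mult_mono) auto
    then show ?thesis by simp
  qed
  moreover have "1 \<le> n * (t - a)"
  proof -
    have "1 * 1 \<le> n * (t - a)" using assms t by (intro mult_mono) auto
    then show ?thesis by simp
  qed
  ultimately show ?thesis by (simp add: psi_def S_one)
qed

lemma psi_test: "a \<le> b \<Longrightarrow> 1 \<le> n \<Longrightarrow> test_fun (psi a b n)"
  by (rule test_funI[where R="\<bar>a\<bar> + \<bar>b\<bar> + 1", OF psi_smooth]) (rule psi_zero, auto simp: abs_if split: if_splits)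

lemma psi_bound: "a \<le> b \<Longrightarrow> 0 \<le> n \<Longrightarrow> \<bar>psi a b n t\<bar> \<le> 1"
proof -
  assume "a \<le> b" "0 \<le> n"
  then have "n * (t - b) \<le> n * (t - a)" by (intro mult_left_mono) auto
  then have "S (n * (t - b)) \<le> S (n * (t - a))" by (rule S_mono)
  then show ?thesis using S_bounds[of "n * (t - a)"] S_bounds[of "n * (t - b)"]
    by (simp add: psi_def)
qed

lemma psi_lim:
  assumes "a \<le> b"
  shows "(\<lambda>n. psi a b (real (Suc n)) t) \<longlonglongrightarrow> indicator {a<..b} t"
proof -
  consider "t \<le> a" | "a < t" "t \<le> b" | "b < t" by linarith
  then show ?thesis
  proof cases
    case 1
    have "psi a b (real (Suc n)) t = 0" for n using assms 1 by (intro psi_zero) auto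
    then show ?thesis using 1 by (simp add: indicator_def)
  next
    case 2
    obtain N :: nat where N: "1 / (t - a) \<le> N" using real_arch_simple by blast
    have "eventually (\<lambda>n. psi a b (real (Suc n)) t = 1) sequentially"
      unfolding eventually_sequentially
    proof (intro exI allI impI)
      fix n assume "N \<le> n"
      then have "1 / (t - a) \<le> real (Suc n)" using N by linarith
      then have "1 \<le> real (Suc n) * (t - a)" using 2 by (simp add: field_simps)
      moreover have "real (Suc n) * (t - b) \<le> 0" using 2 by (simp add: mult_nonneg_nonpos)
      ultimately show "psi a b (real (Suc n)) t = 1" by (simp add: psi_def S_one S_zero)
    qed
    then have "(\<lambda>n. psi a b (real (Suc n)) t) \<longlonglongrightarrow> 1" by (rule tendsto_eventually)
    then show ?thesis using 2 by (simp add: indicator_def)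
  next
    case 3
    obtain N :: nat where N: "1 / (t - b) \<le> N" using real_arch_simple by blast
    have "eventually (\<lambda>n. psi a b (real (Suc n)) t = 0) sequentially"
      unfolding eventually_sequentially
    proof (intro exI allI impI)
      fix n assume "N \<le> n"
      then have "1 / (t - b) \<le> real (Suc n)" using N by linarith
      then have 1: "1 \<le> real (Suc n) * (t - b)" using 3 by (simp add: field_simps)
      moreover have "real (Suc n) * (t - b) \<le> real (Suc n) * (t - a)" using 3 assms
        by (intro mult_left_mono) auto
      ultimately have "1 \<le> real (Suc n) * (t - a)" by linarith
      with 1 show "psi a b (real (Suc n)) t = 0" by (simp add: psi_def S_one del: of_nat_Suc)
    qed
    then have "(\<lambda>n. psi a b (real (Suc n)) t) \<longlonglongrightarrow> 0" by (rule tendsto_eventually)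
    then show ?thesis using 3 by (simp add: indicator_def)
  qed
qed

lemma psi_meas: "psi a b n \<in> borel_measurable lborel"
proof -
  have "psi a b n \<in> borel_measurable borel"
    by (rule borel_measurable_continuous_onI) (rule smooth_cont[OF psi_smooth])
  then show ?thesis by simp
qed

lemma core:
  fixes a b c :: real
  assumes h: "loc h" and H: "\<And>\<psi>. test_fun \<psi> \<Longrightarrow> (\<integral>t. h t * \<psi> t \<partial>lborel) = c * (\<integral>t. \<psi> t \<partial>lborel)"
    and ab: "a \<le> b"
  shows "(LBINT t=a..b. h t) = c * (b - a)"
proof -
  have hm: "h \<in> borel_measurable lborel" and hi: "set_integrable lborel {a..b+1} h"
    using h by (auto simp: loc_def)
  let ?s = "\<lambda>n t. h t * psi a b (real (Suc n)) t"
  let ?w = "\<lambda>t. indicator {a..b+1} t * \<bar>h t\<bar>"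
  have wi: "integrable lborel ?w"
    using integrable_norm[OF hi[unfolded set_integrable_def]] by (simp add: abs_mult)
  have bnd: "\<bar>psi a b (real (Suc n)) t\<bar> \<le> indicator {a..b+1} t" for n t
  proof (cases "t \<in> {a..b+1}")
    case True then show ?thesis using psi_bound[OF ab, of "real (Suc n)" t] by simp
  next
    case False
    then have "psi a b (real (Suc n)) t = 0" using ab by (intro psi_zero) auto
    then show ?thesis by simp
  qed
  have L1: "(\<lambda>n. \<integral>t. ?s n t \<partial>lborel) \<longlonglongrightarrow> (\<integral>t. h t * indicator {a<..b} t \<partial>lborel)"
  proof (rule integral_dominated_convergence[where w = ?w])
    show "(\<lambda>t. h t * indicat_real {a<..b} t) \<in> borel_measurable lborel" using hm by measurable
    show "?s n \<in> borel_measurable lborel" for n using hm psi_meas by measurable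
    show "AE t in lborel. (\<lambda>n. ?s n t) \<longlonglongrightarrow> h t * indicat_real {a<..b} t"
      by (intro AE_I2 tendsto_mult_left psi_lim ab)
    show "AE t in lborel. norm (?s n t) \<le> ?w t" for n
    proof (intro AE_I2)
      fix t show "norm (?s n t) \<le> ?w t"
        using bnd[of n t] by (auto simp: abs_mult mult.commute intro: mult_left_mono)
    qed
  qed (rule wi)
  have L2: "(\<lambda>n. \<integral>t. psi a b (real (Suc n)) t \<partial>lborel) \<longlonglongrightarrow> (\<integral>t. indicator {a<..b} t \<partial>lborel)"
  proof (rule integral_dominated_convergence[where w = "indicator {a..b+1}"])
    show "integrable lborel (indicat_real {a..b + 1})"
    proof -
      have "integrable lborel (\<lambda>x. indicator {a..b+1} x *\<^sub>R (1::real))"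
        by (rule borel_integrable_compact) auto
      then show ?thesis by simp
    qed
    show "AE t in lborel. (\<lambda>n. psi a b (real (Suc n)) t) \<longlonglongrightarrow> indicat_real {a<..b} t"
      by (intro AE_I2 psi_lim ab)
    show "AE t in lborel. norm (psi a b (real (Suc n)) t) \<le> indicat_real {a..b + 1} t" for n
      using bnd by auto
  qed (use psi_meas in auto)
  have eq: "(\<integral>t. ?s n t \<partial>lborel) = c * (\<integral>t. psi a b (real (Suc n)) t \<partial>lborel)" for n
    using H[OF psi_test] ab by simp
  have "(\<lambda>n. \<integral>t. ?s n t \<partial>lborel) \<longlonglongrightarrow> c * (\<integral>t. indicator {a<..b} t \<partial>lborel)"
    unfolding eq by (intro tendsto_mult_left L2)
  with L1 have "(\<integral>t. h t * indicator {a<..b} t \<partial>lborel) = c * (\<integral>t. indicator {a<..b} t \<partial>lborel)"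
    using LIMSEQ_unique by blast
  moreover have "(\<integral>t. indicator {a<..b} t \<partial>lborel) = b - a"
    using ab by simp
  moreover have "(LBINT t=a..b. h t) = (\<integral>t. h t * indicator {a<..b} t \<partial>lborel)"
    using ab by (simp add: interval_integral_Ioc set_lebesgue_integral_def mult.commute)
  ultimately show ?thesis by simp
qed




lemma Zlem:
  assumes k: "loc k" and Z: "\<And>(a::real) (b::real). a \<le> b \<Longrightarrow> (LBINT t=a..b. k t) = 0"
  shows "AE t in lborel. k t = 0"
proof -
  have km[measurable]: "k \<in> borel_measurable lborel" using k by (simp add: loc_def)
  define kn where "kn n t = indicator {- real n<..real n} t * k t" for n :: nat and t
  have kn_m[measurable]: "kn n \<in> borel_measurable lborel" for n unfolding kn_def by measurable
  have kn_i: "integrable lborel (kn n)" for n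
  proof -
    have "set_integrable lborel {- real n..real n} k" using k by (simp add: loc_def)
    then have "set_integrable lborel {- real n<..real n} k" by (rule set_integrable_subset) auto
    then show ?thesis by (simp add: set_integrable_def kn_def[abs_def])
  qed
  have I0: "(\<integral>t. indicator {x<..} t * kn n t \<partial>lborel) = 0" for n x
  proof -
    define a where "a = max x (- real n)"
    let ?a = a
    have eq: "indicator {x<..} t * kn n t = indicator {?a<..real n} t * k t" for t
      by (auto simp: kn_def indicator_def a_def)
    show ?thesis
    proof (cases "?a \<le> real n")
      case True
      have "(\<integral>t. indicator {?a<..real n} t * k t \<partial>lborel) = (LBINT t=?a..real n. k t)"
        using True by (simp add: interval_integral_Ioc set_lebesgue_integral_def)
      also have "\<dots> = 0" using Z[of a "real n"] True by simp
      finally show ?thesis unfolding eq .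
    next
      case False
      then have "indicator {?a<..real n} t = (0::real)" for t by (auto simp: indicator_def)
      then show ?thesis unfolding eq by simp
    qed
  qed
  have AEn: "AE t in lborel. kn n t = 0" for n
  proof -
    let ?P = "\<lambda>t. ennreal (max 0 (kn n t))" and ?N = "\<lambda>t. ennreal (max 0 (- kn n t))"
    have ip: "integrable lborel (\<lambda>t. max 0 (kn n t) * indicator A t)" if [measurable]: "A \<in> sets borel" for A
      by (rule Bochner_Integration.integrable_bound[OF integrable_norm[OF kn_i[of n]]])
         (auto simp: indicator_def)
    have ineg: "integrable lborel (\<lambda>t. max 0 (- kn n t) * indicator A t)" if [measurable]: "A \<in> sets borel" for A
      by (rule Bochner_Integration.integrable_bound[OF integrable_norm[OF kn_i[of n]]])
         (auto simp: indicator_def)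
    have em: "emeasure (density lborel (\<lambda>t. ennreal (g t))) A = ennreal (\<integral>t. g t * indicator A t \<partial>lborel)"
      if [measurable]: "A \<in> sets borel" "g \<in> borel_measurable lborel" and nn: "\<And>t. g t \<ge> 0"
        and gi: "integrable lborel (\<lambda>t. g t * indicator A t)" for A g
    proof -
      have "emeasure (density lborel (\<lambda>t. ennreal (g t))) A = (\<integral>\<^sup>+ t. ennreal (g t) * indicator A t \<partial>lborel)"
        by (rule emeasure_density) auto
      also have "\<dots> = (\<integral>\<^sup>+ t. ennreal (g t * indicator A t) \<partial>lborel)"
        by (intro nn_integral_cong) (auto simp: indicator_def)
      also have "\<dots> = ennreal (\<integral>t. g t * indicator A t \<partial>lborel)"
        by (rule nn_integral_eq_integral[OF gi]) (auto simp: nn)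
      finally show ?thesis .
    qed
    have "density lborel ?P = density lborel ?N"
    proof (rule measure_eqI_lessThan)
      show "sets (density lborel ?P) = sets borel" "sets (density lborel ?N) = sets borel" by auto
      fix x :: real
      have mp: "emeasure (density lborel ?P) {x<..} = ennreal (\<integral>t. max 0 (kn n t) * indicator {x<..} t \<partial>lborel)"
        by (rule em) (auto intro: ip)
      have mn: "emeasure (density lborel ?N) {x<..} = ennreal (\<integral>t. max 0 (- kn n t) * indicator {x<..} t \<partial>lborel)"
        by (rule em) (auto intro: ineg)
      show "emeasure (density lborel ?P) {x<..} < \<infinity>" unfolding mp by simp
      have "(\<integral>t. max 0 (kn n t) * indicator {x<..} t \<partial>lborel) - (\<integral>t. max 0 (- kn n t) * indicator {x<..} t \<partial>lborel)
          = (\<integral>t. max 0 (kn n t) * indicator {x<..} t - max 0 (- kn n t) * indicator {x<..} t \<partial>lborel)"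
        by (rule Bochner_Integration.integral_diff[symmetric]) (auto intro: ip ineg)
      also have "\<dots> = (\<integral>t. indicator {x<..} t * kn n t \<partial>lborel)"
        by (intro Bochner_Integration.integral_cong) (auto simp: indicator_def max_def)
      also have "\<dots> = 0" by (rule I0)
      finally show "emeasure (density lborel ?P) {x<..} = emeasure (density lborel ?N) {x<..}"
        unfolding mp mn by simp
    qed
    then have "AE t in lborel. ?P t = ?N t"
      by (intro sigma_finite_measure.density_unique[OF sigma_finite_lborel]) auto
    then show ?thesis
      by eventually_elim (auto simp: max_def split: if_splits)
  qed
  then have "AE t in lborel. \<forall>n. kn n t = 0" by (simp add: AE_all_countable)
  then show ?thesis
  proof eventually_elim
    fix t assume a: "\<forall>n. kn n t = 0"
    obtain n :: nat where "\<bar>t\<bar> < n" using reals_Archimedean2 by blast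
    then have "indicator {- real n<..real n} t = (1::real)" by (auto simp: indicator_def)
    then show "k t = 0" using a[rule_format, of n] by (simp add: kn_def)
  qed
qed

lemma FL:
  assumes k: "loc k" and H: "\<And>\<phi>. test_fun \<phi> \<Longrightarrow> (\<integral>t. k t * \<phi> t \<partial>lborel) = 0"
  shows "AE t in lborel. k t = 0"
proof (rule Zlem[OF k])
  fix a b :: real assume "ereal a \<le> ereal b"
  then have "a \<le> b" by simp
  then show "(LBINT t=a..b. k t) = 0" using core[OF k, of 0 a b] H by simp
qed

lemma loc_const: "loc (\<lambda>t. c)"
proof -
  have "integrable lborel (\<lambda>x. indicator {a..b} x *\<^sub>R c)" for a b :: real
    by (rule borel_integrable_compact) auto
  then show ?thesis by (simp add: loc_def set_integrable_def)
qed

lemma loc_diff: "loc f \<Longrightarrow> loc g \<Longrightarrow> loc (\<lambda>t. f t - g t)"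
  unfolding loc_def set_integrable_def
  by (auto simp: algebra_simps intro: Bochner_Integration.integrable_diff[where f="\<lambda>x. indicator _ x * f x" and g="\<lambda>x. indicator _ x * g x", simplified algebra_simps])

lemma loc_interval_diff:
  fixes a b c :: real
  assumes "loc f" "loc g" "a \<le> b"
  shows "(LBINT t=a..b. f t - g t) = (LBINT t=a..b. f t) - (LBINT t=a..b. g t)"
proof -
  have "set_integrable lborel {a..b} f" "set_integrable lborel {a..b} g" using assms by (auto simp: loc_def)
  then show ?thesis using assms(3) by (simp add: interval_integral_Icc set_integral_diff)
qed

lemma Rlem:
  assumes h: "loc h" and H: "\<And>\<phi>. test_fun \<phi> \<Longrightarrow> (\<integral>t. h t * deriv \<phi> t \<partial>lborel) = 0"
  shows "\<exists>c. AE t in lborel. h t = c"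
proof -
  define c where "c = (\<integral>t. h t * B0 t \<partial>lborel)"
  have HH: "(\<integral>t. h t * \<psi> t \<partial>lborel) = c * (\<integral>t. \<psi> t \<partial>lborel)" if \<psi>: "test_fun \<psi>" for \<psi>
  proof -
    define l where "l = (\<integral>t. \<psi> t \<partial>lborel)"
    have \<chi>: "test_fun (\<lambda>t. \<psi> t - l * B0 t)" by (rule test_lin[OF \<psi> B0_test])
    have "(\<integral>t. \<psi> t - l * B0 t \<partial>lborel) = l - l * (\<integral>t. B0 t \<partial>lborel)"
      using test_integrable[OF \<psi>] test_integrable[OF B0_test] by (simp add: l_def)
    then have "(\<integral>t. \<psi> t - l * B0 t \<partial>lborel) = 0" by (simp add: B0_int)
    then obtain \<Phi> where \<Phi>: "test_fun \<Phi>" "\<And>t. deriv \<Phi> t = \<psi> t - l * B0 t"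
      using prim_test[OF \<chi>] by blast
    have "0 = (\<integral>t. h t * deriv \<Phi> t \<partial>lborel)" using H[OF \<Phi>(1)] by simp
    also have "\<dots> = (\<integral>t. h t * \<psi> t - l * (h t * B0 t) \<partial>lborel)"
      by (simp add: \<Phi>(2) algebra_simps)
    also have "\<dots> = (\<integral>t. h t * \<psi> t \<partial>lborel) - l * c"
      using loc_mult_test[OF h \<psi>] loc_mult_test[OF h B0_test] by (simp add: c_def)
    finally show ?thesis by (simp add: l_def mult.commute)
  qed
  have "AE t in lborel. h t - c = 0"
  proof (rule Zlem)
    show "loc (\<lambda>t. h t - c)" by (rule loc_diff[OF h loc_const])
    fix a b :: real assume "ereal a \<le> ereal b"
    then have ab: "a \<le> b" by simp
    have "(LBINT t=a..b. h t - c) = (LBINT t=a..b. h t) - (LBINT t=a..b. c)"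
      by (rule loc_interval_diff[OF h loc_const ab])
    also have "\<dots> = 0" using core[OF h HH ab] ab by simp
    finally show "(LBINT t=a..b. h t - c) = 0" .
  qed
  then show ?thesis by auto
qed

lemma weak_deriv_unique:
  assumes "weak_deriv f g1" "weak_deriv f g2" "loc g1" "loc g2"
  shows "AE t in lborel. g1 t = g2 t"
proof -
  have "AE t in lborel. g1 t - g2 t = 0"
  proof (rule FL)
    show "loc (\<lambda>t. g1 t - g2 t)" by (rule loc_diff) fact+
    fix \<phi> assume "test_fun \<phi>"
    then have "integrable lborel (\<lambda>t. g1 t * \<phi> t)" "integrable lborel (\<lambda>t. g2 t * \<phi> t)"
      "(\<integral>t. g1 t * \<phi> t \<partial>lborel) = (\<integral>t. g2 t * \<phi> t \<partial>lborel)"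
      using assms(1,2) unfolding weak_deriv_def by auto
    then show "(\<integral>t. (g1 t - g2 t) * \<phi> t \<partial>lborel) = 0" by (simp add: algebra_simps)
  qed
  then show ?thesis by auto
qed

lemma test_deriv_meas: "test_fun \<phi> \<Longrightarrow> deriv \<phi> \<in> borel_measurable lborel"
proof -
  assume "test_fun \<phi>"
  then have "smooth (deriv \<phi>)" by (simp add: test_fun_iff smooth_deriv)
  then have "deriv \<phi> \<in> borel_measurable borel"
    by (intro borel_measurable_continuous_onI smooth_cont)
  then show ?thesis by simp
qed

lemma test_meas: "test_fun \<phi> \<Longrightarrow> \<phi> \<in> borel_measurable lborel"
proof -
  assume "test_fun \<phi>"
  then have "\<phi> \<in> borel_measurable borel"
    by (intro borel_measurable_continuous_onI smooth_cont) (simp add: test_fun_iff)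
  then show ?thesis by simp
qed

lemma weak_deriv_AE:
  assumes w: "weak_deriv f g" and m: "f' \<in> borel_measurable lborel" "g' \<in> borel_measurable lborel"
    and ae: "AE t in lborel. f t = f' t" "AE t in lborel. g t = g' t"
  shows "weak_deriv f' g'"
  unfolding weak_deriv_def
proof (intro allI impI)
  fix \<phi> assume \<phi>: "test_fun \<phi>"
  have i1: "integrable lborel (\<lambda>t. f t * deriv \<phi> t)" and i2: "integrable lborel (\<lambda>t. g t * \<phi> t)"
    and e: "(\<integral>t. f t * deriv \<phi> t \<partial>lborel) = - (\<integral>t. g t * \<phi> t \<partial>lborel)"
    using w \<phi> unfolding weak_deriv_def by auto
  have m1: "(\<lambda>t. f' t * deriv \<phi> t) \<in> borel_measurable lborel" using m test_deriv_meas[OF \<phi>] by measurable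
  have m2: "(\<lambda>t. g' t * \<phi> t) \<in> borel_measurable lborel" using m test_meas[OF \<phi>] by measurable
  have a1: "AE t in lborel. f t * deriv \<phi> t = f' t * deriv \<phi> t" using ae(1) by eventually_elim simp
  have a2: "AE t in lborel. g t * \<phi> t = g' t * \<phi> t" using ae(2) by eventually_elim simp
  have j1: "integrable lborel (\<lambda>t. f' t * deriv \<phi> t)" by (rule integrable_cong_AE_imp[OF i1 m1 a1])
  have j2: "integrable lborel (\<lambda>t. g' t * \<phi> t)" by (rule integrable_cong_AE_imp[OF i2 m2 a2])
  have "(\<integral>t. f t * deriv \<phi> t \<partial>lborel) = (\<integral>t. f' t * deriv \<phi> t \<partial>lborel)"
    by (rule integral_cong_AE[OF borel_measurable_integrable[OF i1] m1 a1])
  moreover have "(\<integral>t. g t * \<phi> t \<partial>lborel) = (\<integral>t. g' t * \<phi> t \<partial>lborel)"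
    by (rule integral_cong_AE[OF borel_measurable_integrable[OF i2] m2 a2])
  ultimately show "integrable lborel (\<lambda>t. f' t * deriv \<phi> t) \<and> integrable lborel (\<lambda>t. g' t * \<phi> t) \<and>
      (\<integral>t. f' t * deriv \<phi> t \<partial>lborel) = - (\<integral>t. g' t * \<phi> t \<partial>lborel)"
    using j1 j2 e by simp
qed




lemma loc_set_int: "loc g \<Longrightarrow> set_integrable lborel {a..b} g"
  by (simp add: loc_def)

lemma loc_meas: "loc g \<Longrightarrow> g \<in> borel_measurable lborel"
  by (simp add: loc_def)

lemma loc_interval_integrable:
  fixes a b :: real
  assumes "loc g" shows "interval_lebesgue_integrable lborel a b g"
proof -
  have "set_integrable lborel {min a b..max a b} g" using assms by (simp add: loc_def)
  then have "set_integrable lborel {min a b<..<max a b} g" by (rule set_integrable_subset) auto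
  then show ?thesis
    by (auto simp: interval_lebesgue_integrable_def min_def max_def split: if_splits)
qed

lemma loc_sum:
  fixes a b c :: real
  assumes "loc g"
  shows "(LBINT x=a..b. g x) + (LBINT x=b..c. g x) = (LBINT x=a..c. g x)"
proof (rule interval_integral_sum)
  have "interval_lebesgue_integrable lborel (min a (min b c)) (max a (max b c)) g"
    by (rule loc_interval_integrable[OF assms])
  then show "interval_lebesgue_integrable lborel (min (ereal a) (min (ereal b) (ereal c))) (max (ereal a) (max (ereal b) (ereal c))) g"
    by (simp add: min_def max_def split: if_splits)
qed

lemma G_cont:
  fixes cc tt :: real
  assumes g: "loc g"
  shows "isCont (\<lambda>t::real. LBINT s=cc..t. g s) tt"
proof -
  define T where "T = \<bar>cc\<bar> + \<bar>tt\<bar> + 1"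
  have gi: "g integrable_on {-T..T}" using loc_set_int[OF g] by (rule set_borel_integral_eq_integral)
  have c1: "continuous_on {-T..T} (\<lambda>t. integral {-T..t} g)"
    by (rule indefinite_integral_continuous_1[OF gi])
  have eq: "(LBINT s=cc..t. g s) = integral {-T..t} g - (LBINT s=-T..cc. g s)" if "t \<in> {-T..T}" for t
  proof -
    have "(LBINT s=-T..t. g s) = integral {-T..t} g"
      using that by (intro interval_integral_eq_integral loc_set_int[OF g]) auto
    moreover have "(LBINT s=-T..cc. g s) + (LBINT s=cc..t. g s) = (LBINT s=-T..t. g s)"
      using loc_sum[OF g] by simp
    ultimately show ?thesis by simp
  qed
  have "continuous_on {-T..T} (\<lambda>t. LBINT s=cc..t. g s)"
    by (rule continuous_on_eq[OF continuous_on_diff[OF c1 continuous_on_const]]) (use eq in simp)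
  moreover have "tt \<in> interior {-T..T}" by (auto simp: T_def interior_atLeastAtMost_real)
  ultimately show ?thesis using continuous_on_interior by blast
qed

lemma G_meas:
  fixes cc :: real
  assumes g: "loc g"
  shows "(\<lambda>t::real. LBINT s=cc..t. g s) \<in> borel_measurable lborel"
proof -
  have "(\<lambda>t::real. LBINT s=cc..t. g s) \<in> borel_measurable borel"
    by (rule borel_measurable_continuous_onI) (intro continuous_at_imp_continuous_on ballI G_cont[OF g])
  then show ?thesis by simp
qed

lemma prod_int:
  fixes a b :: "real \<Rightarrow> real"
  assumes a: "integrable lborel a" and b: "integrable lborel b"
  shows "integrable (lborel \<Otimes>\<^sub>M lborel) (\<lambda>(x,y). a x * b y)"
proof (rule lborel_pair.Fubini_integrable)
  have [measurable]: "a \<in> borel_measurable lborel" "b \<in> borel_measurable lborel" using a b by auto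
  show "(\<lambda>(x,y). a x * b y) \<in> borel_measurable (lborel \<Otimes>\<^sub>M lborel)" by measurable
  have "(\<lambda>x. \<integral>y. norm (case (x, y) of (x, y) \<Rightarrow> a x * b y) \<partial>lborel) = (\<lambda>x. \<bar>a x\<bar> * (\<integral>y. \<bar>b y\<bar> \<partial>lborel))"
    by (simp add: abs_mult)
  moreover have "integrable lborel (\<lambda>x. \<bar>a x\<bar> * (\<integral>y. \<bar>b y\<bar> \<partial>lborel))"
    using a by (intro integrable_mult_left integrable_abs)
  ultimately show "integrable lborel (\<lambda>x. \<integral>y. norm (case (x, y) of (x, y) \<Rightarrow> a x * b y) \<partial>lborel)" by simp
  show "AE x in lborel. integrable lborel (\<lambda>y. case (x, y) of (x, y) \<Rightarrow> a x * b y)"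
    using b by (intro AE_I2) simp
qed

definition K :: "real \<Rightarrow> real \<Rightarrow> real" where
  "K s t = (if 0 < s \<and> s \<le> t then 1 else if t < s \<and> s \<le> 0 then -1 else 0)"

lemma K_meas[measurable]: "(\<lambda>(s,t). K s t) \<in> borel_measurable (lborel \<Otimes>\<^sub>M lborel)"
  unfolding K_def by measurable

lemma G_kernel:
  assumes g: "loc g"
  shows "(LBINT s=0..t. g s) = (\<integral>s. g s * K s t \<partial>lborel)"
proof (cases "0 \<le> t")
  case True
  have "(LBINT s=0..t. g s) = (\<integral>s. indicator {0<..t} s *\<^sub>R g s \<partial>lborel)"
    using True interval_integral_Ioc[of 0 t g] by (simp add: zero_ereal_def set_lebesgue_integral_def)
  also have "\<dots> = (\<integral>s. g s * K s t \<partial>lborel)"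
    using True by (intro Bochner_Integration.integral_cong) (auto simp: K_def indicator_def)
  finally show ?thesis .
next
  case False
  have "(LBINT s=0..t. g s) = - (LBINT s=t..0. g s)" by (rule interval_integral_endpoints_reverse)
  also have "\<dots> = - (\<integral>s. indicator {t<..0} s *\<^sub>R g s \<partial>lborel)"
    using False interval_integral_Ioc[of t 0 g] by (simp add: zero_ereal_def set_lebesgue_integral_def)
  also have "\<dots> = (\<integral>s. g s * K s t \<partial>lborel)"
    using False by (subst integral_minus[symmetric], intro Bochner_Integration.integral_cong) (auto simp: K_def indicator_def)
  finally show ?thesis .
qed

lemma FTC_test:
  assumes \<phi>: "test_fun \<phi>" and "a \<le> b"
  shows "(LBINT t=a..b. deriv \<phi> t) = \<phi> b - \<phi> a"
proof (rule interval_integral_FTC_finite)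
  have sm: "smooth (deriv \<phi>)" "smooth \<phi>" using \<phi> by (auto simp: test_fun_iff smooth_deriv)
  show "continuous_on {min a b..max a b} (deriv \<phi>)" by (rule smooth_cont[OF sm(1)])
  fix x show "(\<phi> has_vector_derivative deriv \<phi> x) (at x within {min a b..max a b})"
    using smooth_has_deriv[OF sm(2)] by (simp add: has_real_derivative_iff_has_vector_derivative has_vector_derivative_at_within)
qed

lemma K_inner:
  assumes \<phi>: "test_fun \<phi>"
  shows "(\<integral>t. K s t * deriv \<phi> t \<partial>lborel) = - \<phi> s"
proof -
  obtain R where R0: "R \<ge> 0" and R: "\<And>t. R < \<bar>t\<bar> \<Longrightarrow> \<phi> t = 0" using test_supp[OF \<phi>] by blast
  have dR: "deriv \<phi> t = 0" if "R < \<bar>t\<bar>" for t using deriv_supp[OF R that] .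
  define U where "U = \<bar>s\<bar> + R + 1"
  have "U > R" "U \<ge> \<bar>s\<bar>" using R0 by (auto simp: U_def)
  have phiU: "\<phi> U = 0" "\<phi> (-U) = 0" using R \<open>U > R\<close> by auto
  show ?thesis
  proof (cases "0 < s")
    case True
    have "(\<integral>t. K s t * deriv \<phi> t \<partial>lborel) = (\<integral>t. indicator {s..U} t *\<^sub>R deriv \<phi> t \<partial>lborel)"
    proof (intro Bochner_Integration.integral_cong refl)
      fix t show "K s t * deriv \<phi> t = indicator {s..U} t *\<^sub>R deriv \<phi> t"
        using True dR[of t] \<open>U > R\<close> by (cases "t \<le> U") (auto simp: K_def indicator_def)
    qed
    also have "\<dots> = (LBINT t=s..U. deriv \<phi> t)"
      using \<open>U \<ge> \<bar>s\<bar>\<close> by (simp add: interval_integral_Icc set_lebesgue_integral_def)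
    also have "\<dots> = - \<phi> s" using FTC_test[OF \<phi>, of s U] \<open>U \<ge> \<bar>s\<bar>\<close> phiU by simp
    finally show ?thesis .
  next
    case False
    have "(\<integral>t. K s t * deriv \<phi> t \<partial>lborel) = - (\<integral>t. indicator {-U..<s} t *\<^sub>R deriv \<phi> t \<partial>lborel)"
    proof (subst integral_minus[symmetric], intro Bochner_Integration.integral_cong refl)
      fix t show "K s t * deriv \<phi> t = - (indicator {-U..<s} t *\<^sub>R deriv \<phi> t)"
        using False dR[of t] \<open>U > R\<close> by (cases "- U \<le> t") (auto simp: K_def indicator_def)
    qed
    also have "\<dots> = - (LBINT t=-U..s. deriv \<phi> t)"
      using \<open>U \<ge> \<bar>s\<bar>\<close> by (simp add: interval_integral_Ico set_lebesgue_integral_def)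
    also have "\<dots> = - \<phi> s" using FTC_test[OF \<phi>, of "-U" s] \<open>U \<ge> \<bar>s\<bar>\<close> phiU by simp
    finally show ?thesis .
  qed
qed

lemma ibp:
  assumes g: "loc g" and \<phi>: "test_fun \<phi>"
  shows "integrable lborel (\<lambda>t. (LBINT s=0..t. g s) * deriv \<phi> t)"
    and "(\<integral>t. (LBINT s=0..t. g s) * deriv \<phi> t \<partial>lborel) = - (\<integral>t. g t * \<phi> t \<partial>lborel)"
proof -
  obtain R where R0: "R \<ge> 0" and R: "\<And>t. R < \<bar>t\<bar> \<Longrightarrow> \<phi> t = 0" using test_supp[OF \<phi>] by blast
  have dR: "deriv \<phi> t = 0" if "R < \<bar>t\<bar>" for t using deriv_supp[OF R that] .
  have dc: "isCont (deriv \<phi>) t" for t using test_cont[OF test_deriv[OF \<phi>]] .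
  obtain M where M: "\<And>t. \<bar>t\<bar> \<le> R \<Longrightarrow> \<bar>deriv \<phi> t\<bar> \<le> M" using bounded_supp_on[OF dc] by blast
  show "integrable lborel (\<lambda>t. (LBINT s=0..t. g s) * deriv \<phi> t)"
  proof (rule cont_supp_integrable[of _ R])
    have Gc: "isCont (\<lambda>t::real. LBINT s=0..t. g s) t" for t
      using G_cont[OF g, where cc=0 and tt=t] by (simp add: zero_ereal_def)
    show "isCont (\<lambda>t. (LBINT s=0..t. g s) * deriv \<phi> t) t" for t
      by (intro continuous_intros Gc dc)
  qed (simp add: dR)
  have gm[measurable]: "g \<in> borel_measurable lborel" using g by (simp add: loc_def)
  have dm[measurable]: "deriv \<phi> \<in> borel_measurable lborel" using test_deriv_meas[OF \<phi>] .
  define F where "F s t = g s * K s t * deriv \<phi> t" for s t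
  have Fm: "(\<lambda>(s,t). F s t) \<in> borel_measurable (lborel \<Otimes>\<^sub>M lborel)"
  proof -
    have "(\<lambda>x. g (fst x)) \<in> borel_measurable (lborel \<Otimes>\<^sub>M lborel)" by measurable
    moreover have "(\<lambda>x. deriv \<phi> (snd x)) \<in> borel_measurable (lborel \<Otimes>\<^sub>M lborel)" by measurable
    moreover have "(\<lambda>x. K (fst x) (snd x)) \<in> borel_measurable (lborel \<Otimes>\<^sub>M lborel)"
      using K_meas by (simp add: case_prod_beta')
    ultimately show ?thesis unfolding F_def by (simp add: case_prod_beta')
  qed
  have Fi: "integrable (lborel \<Otimes>\<^sub>M lborel) (\<lambda>(s,t). F s t)"
  proof (rule Bochner_Integration.integrable_bound)
    have "integrable lborel (\<lambda>s. norm (indicator {-R..R} s *\<^sub>R g s))"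
      using loc_set_int[OF g] unfolding set_integrable_def by (rule integrable_norm)
    moreover have "integrable lborel (\<lambda>t. indicator {-R..R} t *\<^sub>R M)"
      by (rule borel_integrable_compact) auto
    ultimately show "integrable (lborel \<Otimes>\<^sub>M lborel) (\<lambda>(s,t). norm (indicator {-R..R} s *\<^sub>R g s) * (indicator {-R..R} t *\<^sub>R M))"
      by (rule prod_int)
    show "(\<lambda>(s,t). F s t) \<in> borel_measurable (lborel \<Otimes>\<^sub>M lborel)" by (rule Fm)
    show "AE x in lborel \<Otimes>\<^sub>M lborel. norm (case x of (s, t) \<Rightarrow> F s t) \<le>
        norm (case x of (s,t) \<Rightarrow> norm (indicator {-R..R} s *\<^sub>R g s) * (indicator {-R..R} t *\<^sub>R M))"
    proof (rule AE_I2, clarify)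
      fix s t
      show "norm (F s t) \<le> norm (norm (indicator {-R..R} s *\<^sub>R g s) * (indicator {-R..R} t *\<^sub>R M))"
      proof (cases "\<bar>t\<bar> \<le> R \<and> K s t \<noteq> 0")
        case True
        then have "\<bar>s\<bar> \<le> R" by (auto simp: K_def split: if_splits)
        moreover have "\<bar>K s t\<bar> \<le> 1" by (auto simp: K_def)
        moreover have "\<bar>deriv \<phi> t\<bar> \<le> M" using M True by blast
        ultimately have "\<bar>g s\<bar> * \<bar>K s t\<bar> * \<bar>deriv \<phi> t\<bar> \<le> \<bar>g s\<bar> * 1 * M"
          by (intro mult_mono) auto
        then show ?thesis using True \<open>\<bar>s\<bar> \<le> R\<close> \<open>\<bar>deriv \<phi> t\<bar> \<le> M\<close>
          by (auto simp: F_def abs_mult indicator_def)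
      next
        case False
        then have "F s t = 0" using dR[of t] by (auto simp: F_def)
        then show ?thesis by simp
      qed
    qed
  qed
  have "(\<integral>t. (LBINT s=0..t. g s) * deriv \<phi> t \<partial>lborel) = (\<integral>t. (\<integral>s. F s t \<partial>lborel) \<partial>lborel)"
    by (intro Bochner_Integration.integral_cong refl) (simp add: G_kernel[OF g] F_def)
  also have "\<dots> = (\<integral>s. (\<integral>t. F s t \<partial>lborel) \<partial>lborel)"
    by (rule lborel_pair.Fubini_integral[OF Fi])
  also have "\<dots> = (\<integral>s. g s * (- \<phi> s) \<partial>lborel)"
  proof (intro Bochner_Integration.integral_cong refl)
    fix s
    have "(\<integral>t. F s t \<partial>lborel) = g s * (\<integral>t. K s t * deriv \<phi> t \<partial>lborel)"
      by (simp add: F_def mult.assoc)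
    then show "(\<integral>t. F s t \<partial>lborel) = g s * (- \<phi> s)" by (simp add: K_inner[OF \<phi>])
  qed
  finally show "(\<integral>t. (LBINT s=0..t. g s) * deriv \<phi> t \<partial>lborel) = - (\<integral>t. g t * \<phi> t \<partial>lborel)" by simp
qed


lemma cont_loc: "(\<And>t. isCont F t) \<Longrightarrow> loc F"
proof -
  assume c: "\<And>t. isCont F t"
  have "F \<in> borel_measurable borel"
    by (rule borel_measurable_continuous_onI) (simp add: continuous_at_imp_continuous_on c)
  moreover have "integrable lborel (\<lambda>x. indicator {a..b} x *\<^sub>R F x)" for a b :: real
    by (rule borel_integrable_compact) (auto intro: continuous_at_imp_continuous_on c)
  ultimately show ?thesis by (simp add: loc_def set_integrable_def)
qed

lemma Gfun_cont: "loc g \<Longrightarrow> isCont (\<lambda>t::real. LBINT s=0..t. g s) t"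
  using G_cont[where cc=0 and tt=t] by (simp add: zero_ereal_def)

lemma test_deriv_int0: "test_fun \<phi> \<Longrightarrow> (\<integral>t. deriv \<phi> t \<partial>lborel) = 0"
proof -
  assume \<phi>: "test_fun \<phi>"
  obtain R where R0: "R \<ge> 0" and R: "\<And>t. R < \<bar>t\<bar> \<Longrightarrow> \<phi> t = 0" using test_supp[OF \<phi>] by blast
  have "(\<integral>t. deriv \<phi> t \<partial>lborel) = (LBINT t=-(R+1)..R+1. deriv \<phi> t)"
    using R0 by (intro supp_integral_eq[symmetric, of R]) (auto intro: deriv_supp[OF R])
  also have "\<dots> = \<phi> (R+1) - \<phi> (-(R+1))" using FTC_test[OF \<phi>] R0 by simp
  also have "\<dots> = 0" using R R0 by simp
  finally show ?thesis .
qed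

lemma weak_deriv_prim:
  assumes g: "loc g"
  shows "weak_deriv (\<lambda>t. c + (LBINT s=0..t. g s)) g"
  unfolding weak_deriv_def
proof (intro allI impI conjI)
  fix \<phi> assume \<phi>: "test_fun \<phi>"
  have i1: "integrable lborel (\<lambda>t. (LBINT s=0..t. g s) * deriv \<phi> t)" by (rule ibp(1)[OF g \<phi>])
  have i2: "integrable lborel (\<lambda>t. c * deriv \<phi> t)"
    using test_integrable[OF test_deriv[OF \<phi>]] by simp
  show "integrable lborel (\<lambda>t. (c + (LBINT s=0..t. g s)) * deriv \<phi> t)"
    using Bochner_Integration.integrable_add[OF i2 i1] by (simp add: algebra_simps)
  show "integrable lborel (\<lambda>t. g t * \<phi> t)" by (rule loc_mult_test[OF g \<phi>])
  have "(\<integral>t. (c + (LBINT s=0..t. g s)) * deriv \<phi> t \<partial>lborel)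
      = (\<integral>t. c * deriv \<phi> t \<partial>lborel) + (\<integral>t. (LBINT s=0..t. g s) * deriv \<phi> t \<partial>lborel)"
    using Bochner_Integration.integral_add[OF i2 i1] by (simp add: algebra_simps)
  also have "\<dots> = - (\<integral>t. g t * \<phi> t \<partial>lborel)"
    using ibp(2)[OF g \<phi>] test_deriv_int0[OF \<phi>] by simp
  finally show "(\<integral>t. (c + (LBINT s=0..t. g s)) * deriv \<phi> t \<partial>lborel) = - (\<integral>t. g t * \<phi> t \<partial>lborel)" .
qed

lemma weak_deriv_rep:
  assumes w: "weak_deriv f g" and f: "loc f" and g: "loc g"
  shows "\<exists>c. AE t in lborel. f t = c + (LBINT s=0..t. g s)"
proof -
  let ?G = "\<lambda>t::real. LBINT s=0..t. g s"
  have Gl: "loc ?G" by (rule cont_loc[OF Gfun_cont[OF g]])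
  have "\<exists>c. AE t in lborel. f t - ?G t = c"
  proof (rule Rlem)
    show "loc (\<lambda>t. f t - ?G t)" by (rule loc_diff[OF f Gl])
    fix \<phi> assume \<phi>: "test_fun \<phi>"
    have i1: "integrable lborel (\<lambda>t. f t * deriv \<phi> t)" and e1: "(\<integral>t. f t * deriv \<phi> t \<partial>lborel) = - (\<integral>t. g t * \<phi> t \<partial>lborel)"
      using w \<phi> unfolding weak_deriv_def by auto
    have i2: "integrable lborel (\<lambda>t. ?G t * deriv \<phi> t)" by (rule ibp(1)[OF g \<phi>])
    have "(\<integral>t. (f t - ?G t) * deriv \<phi> t \<partial>lborel) = (\<integral>t. f t * deriv \<phi> t \<partial>lborel) - (\<integral>t. ?G t * deriv \<phi> t \<partial>lborel)"
      using Bochner_Integration.integral_diff[OF i1 i2] by (simp add: algebra_simps)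
    also have "\<dots> = 0" using e1 ibp(2)[OF g \<phi>] by simp
    finally show "(\<integral>t. (f t - ?G t) * deriv \<phi> t \<partial>lborel) = 0" .
  qed
  then obtain c where "AE t in lborel. f t - ?G t = c" by blast
  then have "AE t in lborel. f t = c + ?G t" by eventually_elim simp
  then show ?thesis by blast
qed




lemma loc_mult_cont:
  assumes r: "loc r" and c: "\<And>t. isCont f t"
  shows "loc (\<lambda>t. f t * r t)"
proof -
  have "f \<in> borel_measurable borel"
    by (rule borel_measurable_continuous_onI) (simp add: continuous_at_imp_continuous_on c)
  then have fm: "f \<in> borel_measurable lborel" by simp
  have rm: "r \<in> borel_measurable lborel" using r by (simp add: loc_def)
  have "set_integrable lborel {a..b} (\<lambda>t. f t * r t)" for a b
  proof -
    obtain M where M: "\<And>t. \<bar>t\<bar> \<le> \<bar>a\<bar> + \<bar>b\<bar> \<Longrightarrow> \<bar>f t\<bar> \<le> M" using bounded_supp_on[OF c] by blast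
    show ?thesis unfolding set_integrable_def
    proof (rule Bochner_Integration.integrable_bound)
      show "integrable lborel (\<lambda>t. M * norm (indicat_real {a..b} t *\<^sub>R r t))"
        using loc_set_int[OF r] unfolding set_integrable_def by (intro integrable_mult_right integrable_norm)
      show "(\<lambda>t. indicat_real {a..b} t *\<^sub>R (f t * r t)) \<in> borel_measurable lborel" using fm rm by measurable
      show "AE x in lborel. norm (indicat_real {a..b} x *\<^sub>R (f x * r x)) \<le> norm (M * norm (indicat_real {a..b} x *\<^sub>R r x))"
      proof (rule AE_I2)
        fix x show "norm (indicat_real {a..b} x *\<^sub>R (f x * r x)) \<le> norm (M * norm (indicat_real {a..b} x *\<^sub>R r x))"
        proof (cases "x \<in> {a..b}")
          case True
          then have "\<bar>f x\<bar> \<le> M" by (intro M) auto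
          then show ?thesis using True by (auto simp: abs_mult intro: mult_right_mono)
        qed simp
      qed
    qed
  qed
  then show ?thesis using fm rm by (simp add: loc_def)
qed

lemma loc_abs: "loc r \<Longrightarrow> loc (\<lambda>t. \<bar>r t\<bar>)"
  unfolding loc_def set_integrable_def
proof (intro conjI allI; elim conjE)
  fix a b :: real
  assume "\<forall>a b. integrable lborel (\<lambda>x. indicat_real {a..b} x *\<^sub>R r x)"
  then have "integrable lborel (\<lambda>x. \<bar>indicat_real {a..b} x *\<^sub>R r x\<bar>)" by (intro integrable_abs) auto
  then show "integrable lborel (\<lambda>x. indicat_real {a..b} x *\<^sub>R \<bar>r x\<bar>)" by (simp add: abs_mult)
qed auto

lemma eps_zero:
  fixes d :: real
  assumes "\<And>e. e > 0 \<Longrightarrow> \<bar>d\<bar> \<le> e"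
  shows "d = 0"
proof (rule ccontr)
  assume "d \<noteq> 0"
  then have "\<bar>d\<bar> \<le> \<bar>d\<bar> / 2" using assms[of "\<bar>d\<bar>/2"] by simp
  with \<open>d \<noteq> 0\<close> show False by simp
qed

lemma ac_chain:
  fixes Q r Gf Gd :: "real \<Rightarrow> real" and qc a b :: real
  assumes r: "loc r" and Qdef: "\<And>u v. Q v - Q u = (LBINT t=u..v. r t)" and Qc: "\<And>t. isCont Q t"
    and Qb: "\<And>t. \<bar>Q t\<bar> \<le> qc" and qc1: "qc < 1"
    and Gder: "\<And>z. \<bar>z\<bar> < 1 \<Longrightarrow> (Gf has_real_derivative Gd z) (at z)"
    and Gdc: "\<And>z. \<bar>z\<bar> < 1 \<Longrightarrow> isCont Gd z"
    and ab: "a \<le> b"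
  shows "Gf (Q b) - Gf (Q a) = (LBINT t=a..b. Gd (Q t) * r t)"
proof -
  define h where "h t = Gd (Q t) * r t" for t
  have GQc: "isCont (\<lambda>t. Gd (Q t)) t" for t
    using Qb qc1 by (intro continuous_at_compose[OF Qc, unfolded o_def] Gdc) (meson le_less_trans)
  have hl: "loc h" unfolding h_def by (rule loc_mult_cont[OF r GQc])
  have ral: "loc (\<lambda>t. \<bar>r t\<bar>)" by (rule loc_abs[OF r])
  define D where "D t = Gf (Q t) - (LBINT \<tau>=a..t. h \<tau>)" for t
  have key: "\<exists>\<delta>>0. \<forall>s t. a \<le> s \<and> s \<le> t \<and> t \<le> b \<and> t - s < \<delta> \<longrightarrow>
               \<bar>D t - D s\<bar> \<le> \<epsilon> * (LBINT \<tau>=s..t. \<bar>r \<tau>\<bar>)" if "\<epsilon> > 0" for \<epsilon>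
  proof -
    have "uniformly_continuous_on {-qc..qc} Gd"
      using Gdc qc1 by (intro compact_uniformly_continuous continuous_at_imp_continuous_on) auto
    then obtain \<eta> where \<eta>: "\<eta> > 0" and U1: "\<And>z z'. z \<in> {-qc..qc} \<Longrightarrow> z' \<in> {-qc..qc} \<Longrightarrow> dist z' z < \<eta> \<Longrightarrow> dist (Gd z') (Gd z) < \<epsilon>"
      unfolding uniformly_continuous_on_def using \<open>\<epsilon> > 0\<close> by metis
    have "uniformly_continuous_on {a..b} Q"
      using Qc by (intro compact_uniformly_continuous continuous_at_imp_continuous_on) auto
    then obtain \<delta> where \<delta>: "\<delta> > 0" and U2: "\<And>z z'. z \<in> {a..b} \<Longrightarrow> z' \<in> {a..b} \<Longrightarrow> dist z' z < \<delta> \<Longrightarrow> dist (Q z') (Q z) < \<eta>"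
      unfolding uniformly_continuous_on_def using \<eta> by metis
    show ?thesis
    proof (intro exI[of _ \<delta>] conjI allI impI \<delta>)
      fix s t assume st: "a \<le> s \<and> s \<le> t \<and> t \<le> b \<and> t - s < \<delta>"
      obtain \<xi> where \<xi>: "min (Q s) (Q t) \<le> \<xi>" "\<xi> \<le> max (Q s) (Q t)" and mvt: "Gf (Q t) - Gf (Q s) = Gd \<xi> * (Q t - Q s)"
      proof -
        consider "Q s = Q t" | "Q s < Q t" | "Q t < Q s" by linarith
        then show thesis
        proof cases
          case 1 then show thesis using that[of "Q s"] by simp
        next
          case 2
          have "\<And>z. Q s \<le> z \<Longrightarrow> z \<le> Q t \<Longrightarrow> (Gf has_real_derivative Gd z) (at z)"
            using Qb[of s] Qb[of t] qc1 by (intro Gder) auto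
          from MVT2[OF 2 this] obtain z where "Q s < z" "z < Q t" "Gf (Q t) - Gf (Q s) = (Q t - Q s) * Gd z" by blast
          then show thesis using that[of z] by (simp add: mult.commute)
        next
          case 3
          have "\<And>z. Q t \<le> z \<Longrightarrow> z \<le> Q s \<Longrightarrow> (Gf has_real_derivative Gd z) (at z)"
            using Qb[of s] Qb[of t] qc1 by (intro Gder) auto
          from MVT2[OF 3 this] obtain z where "Q t < z" "z < Q s" "Gf (Q s) - Gf (Q t) = (Q s - Q t) * Gd z" by blast
          then show thesis using that[of z] by (simp add: algebra_simps)
        qed
      qed
      have \<xi>b: "\<xi> \<in> {-qc..qc}" using \<xi> Qb[of s] Qb[of t] by (auto simp: abs_le_iff)
      have sint: "set_integrable lborel {s..t} f" if "loc f" for f using that by (simp add: loc_def)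
      have e1: "(LBINT \<tau>=a..t. h \<tau>) - (LBINT \<tau>=a..s. h \<tau>) = (LINT \<tau>:{s..t}|lborel. h \<tau>)"
        using loc_sum[OF hl, of a s t] st by (simp add: interval_integral_Icc)
      have e2: "Q t - Q s = (LINT \<tau>:{s..t}|lborel. r \<tau>)" using Qdef[of t s] st by (simp add: interval_integral_Icc)
      have "D t - D s = Gd \<xi> * (LINT \<tau>:{s..t}|lborel. r \<tau>) - (LINT \<tau>:{s..t}|lborel. h \<tau>)"
        unfolding D_def using mvt e1 e2 by simp
      also have "\<dots> = (LINT \<tau>:{s..t}|lborel. (Gd \<xi> - Gd (Q \<tau>)) * r \<tau>)"
      proof -
        have "(LINT \<tau>:{s..t}|lborel. (Gd \<xi> - Gd (Q \<tau>)) * r \<tau>) = (LINT \<tau>:{s..t}|lborel. Gd \<xi> * r \<tau> - h \<tau>)"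
          by (simp add: h_def algebra_simps)
        also have "\<dots> = (LINT \<tau>:{s..t}|lborel. Gd \<xi> * r \<tau>) - (LINT \<tau>:{s..t}|lborel. h \<tau>)"
          by (rule set_integral_diff(2)) (use sint[OF r] sint[OF hl] in auto)
        finally show ?thesis by simp
      qed
      finally have Deq: "D t - D s = (LINT \<tau>:{s..t}|lborel. (Gd \<xi> - Gd (Q \<tau>)) * r \<tau>)" .
      have i3: "set_integrable lborel {s..t} (\<lambda>\<tau>. (Gd \<xi> - Gd (Q \<tau>)) * r \<tau>)"
        by (rule sint, rule loc_mult_cont[OF r]) (intro continuous_intros GQc)
      have "\<bar>D t - D s\<bar> \<le> (LINT \<tau>:{s..t}|lborel. norm ((Gd \<xi> - Gd (Q \<tau>)) * r \<tau>))"
        unfolding Deq using set_integral_norm_bound[OF i3] by simp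
      also have "\<dots> \<le> (LINT \<tau>:{s..t}|lborel. \<epsilon> * \<bar>r \<tau>\<bar>)"
      proof (rule set_integral_mono)
        show "set_integrable lborel {s..t} (\<lambda>\<tau>. norm ((Gd \<xi> - Gd (Q \<tau>)) * r \<tau>))"
          using integrable_abs[OF i3[unfolded set_integrable_def]] unfolding set_integrable_def by (simp add: abs_mult)
        show "set_integrable lborel {s..t} (\<lambda>\<tau>. \<epsilon> * \<bar>r \<tau>\<bar>)" using sint[OF ral] by simp
        fix \<tau> assume \<tau>: "\<tau> \<in> {s..t}"
        have "dist (Q \<tau>) (Q s) < \<eta>" "dist (Q \<tau>) (Q t) < \<eta>"
          using st \<tau> by (intro U2; auto simp: dist_real_def)+
        then have "dist (Q \<tau>) \<xi> < \<eta>" using \<xi> by (auto simp: dist_real_def)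
        then have "dist (Gd (Q \<tau>)) (Gd \<xi>) < \<epsilon>"
          using \<xi>b Qb[of \<tau>] by (intro U1) (auto simp: abs_le_iff)
        then have "\<bar>Gd \<xi> - Gd (Q \<tau>)\<bar> \<le> \<epsilon>" by (simp add: dist_real_def abs_minus_commute)
        then show "norm ((Gd \<xi> - Gd (Q \<tau>)) * r \<tau>) \<le> \<epsilon> * \<bar>r \<tau>\<bar>"
          by (simp add: abs_mult mult_right_mono)
      qed
      also have "\<dots> = \<epsilon> * (LBINT \<tau>=s..t. \<bar>r \<tau>\<bar>)" using st by (simp add: interval_integral_Icc)
      finally show "\<bar>D t - D s\<bar> \<le> \<epsilon> * (LBINT \<tau>=s..t. \<bar>r \<tau>\<bar>)" .
    qed
  qed
  define A where "A = (LBINT \<tau>=a..b. \<bar>r \<tau>\<bar>)"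
  have A0: "A \<ge> 0" unfolding A_def using ab
    by (simp add: interval_integral_Icc set_lebesgue_integral_def Bochner_Integration.integral_nonneg)
  have sumI: "(\<Sum>i<k. LBINT \<tau>=T i..T (Suc i). \<bar>r \<tau>\<bar>) = (LBINT \<tau>=T 0..T k. \<bar>r \<tau>\<bar>)" for T :: "nat \<Rightarrow> real" and k
  proof (induction k)
    case 0 then show ?case by simp
  next
    case (Suc k) then show ?case using loc_sum[OF ral, of "T 0" "T k" "T (Suc k)"] by simp
  qed
  have bnd: "\<bar>D b - D a\<bar> \<le> e" if e: "e > 0" for e
  proof -
    have "e / (A + 1) > 0" using e A0 by simp
    from key[OF this] obtain \<delta> where \<delta>: "\<delta> > 0" and K: "\<And>s t. a \<le> s \<and> s \<le> t \<and> t \<le> b \<and> t - s < \<delta> \<Longrightarrow>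
               \<bar>D t - D s\<bar> \<le> e / (A + 1) * (LBINT \<tau>=s..t. \<bar>r \<tau>\<bar>)" by blast
    obtain n :: nat where n: "(b - a) / \<delta> \<le> n" using real_arch_simple by blast
    define N where "N = Suc n"
    have N: "(b - a) / N < \<delta>"
    proof -
      have "(b - a) < \<delta> * N" using n \<delta> by (simp add: N_def field_simps)
      then show ?thesis by (simp add: N_def field_simps)
    qed
    define T where "T i = a + real i * (b - a) / N" for i
    have T0: "T 0 = a" and TN: "T N = b" by (auto simp: T_def N_def)
    have Tstep: "T (Suc i) - T i = (b - a) / N" for i by (simp add: T_def add_divide_distrib[symmetric] algebra_simps)
    have Tmono: "T i \<le> T (Suc i)" for i
    proof -
      have "(b - a) / N \<ge> 0" using ab by (simp add: N_def)
      then show ?thesis using Tstep[of i] by linarith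
    qed
    have Tb: "a \<le> T i \<and> T i \<le> b" if "i \<le> N" for i
    proof -
      have "real i * (b - a) / N \<le> real N * (b - a) / N" using that ab
        by (intro divide_right_mono mult_right_mono) auto
      then show ?thesis using ab by (auto simp: T_def N_def)
    qed
    have "D b - D a = (\<Sum>i<N. D (T (Suc i)) - D (T i))"
      using sum_lessThan_telescope[of "\<lambda>i. D (T i)" N] T0 TN by simp
    then have "\<bar>D b - D a\<bar> \<le> (\<Sum>i<N. \<bar>D (T (Suc i)) - D (T i)\<bar>)"
      by (simp add: sum_abs)
    also have "\<dots> \<le> (\<Sum>i<N. e / (A + 1) * (LBINT \<tau>=T i..T (Suc i). \<bar>r \<tau>\<bar>))"
    proof (rule sum_mono)
      fix i assume "i \<in> {..<N}"
      then show "\<bar>D (T (Suc i)) - D (T i)\<bar> \<le> e / (A + 1) * (LBINT \<tau>=T i..T (Suc i). \<bar>r \<tau>\<bar>)"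
        using Tb[of i] Tb[of "Suc i"] Tmono[of i] Tstep[of i] N by (intro K) auto
    qed
    also have "\<dots> = e / (A + 1) * A"
      by (subst sum_distrib_left[symmetric]) (simp only: sumI T0 TN A_def)
    also have "\<dots> \<le> e" using A0 e by (simp add: field_simps)
    finally show ?thesis .
  qed
  have "D b - D a = 0" by (rule eps_zero[OF bnd])
  then show ?thesis by (simp add: D_def h_def)
qed




lemma lborel_to_lebesgue:
  fixes g :: "real \<Rightarrow> real"
  shows "set_integrable lborel A g \<Longrightarrow> g absolutely_integrable_on A"
  unfolding set_integrable_def
  by (subst integrable_completion) (auto dest: borel_measurable_integrable)

lemma lebesgue_to_lborel:
  fixes g :: "real \<Rightarrow> real"
  assumes "g absolutely_integrable_on A" "g \<in> borel_measurable borel" "A \<in> sets borel"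
  shows "set_integrable lborel A g"
  using assms unfolding set_integrable_def
  by (subst integrable_completion[symmetric]) auto

lemma cont_meas: "(\<And>t. isCont (g::real\<Rightarrow>real) t) \<Longrightarrow> g \<in> borel_measurable borel"
  by (rule borel_measurable_continuous_onI) (simp add: continuous_at_imp_continuous_on)

lemma cont_AE_bound:
  fixes f :: "real \<Rightarrow> real"
  assumes c: "\<And>t. isCont f t" and ae: "AE t in lborel. \<bar>f t\<bar> \<le> qc"
  shows "\<bar>f t0\<bar> \<le> qc"
proof (rule ccontr)
  assume "\<not> \<bar>f t0\<bar> \<le> qc"
  then have e: "\<bar>f t0\<bar> - qc > 0" by simp
  have "f \<midarrow>t0\<rightarrow> f t0" using c[of t0] by (simp add: isCont_def)
  from LIM_D[OF this e] obtain d where d: "d > 0" and D: "\<And>t. t \<noteq> t0 \<and> norm (t - t0) < d \<Longrightarrow> norm (f t - f t0) < \<bar>f t0\<bar> - qc"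
    by blast
  have "AE t in lborel. t \<notin> {t0<..<t0+d}"
    using ae
  proof eventually_elim
    fix t assume "\<bar>f t\<bar> \<le> qc"
    show "t \<notin> {t0<..<t0+d}"
    proof
      assume "t \<in> {t0<..<t0+d}"
      then have "norm (f t - f t0) < \<bar>f t0\<bar> - qc" by (intro D) auto
      with \<open>\<bar>f t\<bar> \<le> qc\<close> show False by auto
    qed
  qed
  then have "emeasure lborel {t0<..<t0+d} = 0"
    by (subst (asm) AE_iff_measurable[of "{t0<..<t0+d}" lborel]) auto
  then show False using d by simp
qed

lemma ymono_gen:
  fixes y y' :: "real \<Rightarrow> real"
  assumes yd: "\<And>s. (y has_real_derivative y' s) (at s)" and ypos: "\<And>s. y' s > 0" and ab: "a \<le> b"
  shows "y a \<le> y b"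
  by (rule DERIV_nonneg_imp_nondecreasing[OF ab]) (use yd ypos less_imp_le in blast)

lemma subst_prim:
  fixes y x y' f :: "real \<Rightarrow> real" and a b :: real
  assumes f: "loc f"
    and yd: "\<And>s. (y has_real_derivative y' s) (at s)" and ypos: "\<And>s. y' s > 0" and yc: "\<And>s. isCont y' s"
    and xy: "\<And>s. x (y s) = s" and yx: "\<And>t. y (x t) = t" and xmono: "\<And>t1 t2. t1 \<le> t2 \<Longrightarrow> x t1 \<le> x t2"
    and ab: "a \<le> b"
  shows "(LBINT t=y a..y b. f t) = (LBINT s=a..b. f (y s) * y' s)"
proof -
  have ymono: "y a \<le> y b" by (rule ymono_gen[OF yd ypos ab])
  have img: "y ` {a..b} = {y a..y b}"
  proof
    show "y ` {a..b} \<subseteq> {y a..y b}"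
    proof
      fix w assume "w \<in> y ` {a..b}"
      then obtain s where s: "s \<in> {a..b}" "w = y s" by blast
      have "y a \<le> y s" "y s \<le> y b" using s by (auto intro!: ymono_gen[OF yd ypos])
      then show "w \<in> {y a..y b}" using s by auto
    qed
    show "{y a..y b} \<subseteq> y ` {a..b}"
    proof
      fix w assume w: "w \<in> {y a..y b}"
      have "x (y a) \<le> x w" "x w \<le> x (y b)" using w xmono by auto
      then have "x w \<in> {a..b}" by (simp add: xy)
      then show "w \<in> y ` {a..b}" using yx[of w] by (metis image_eqI)
    qed
  qed
  have inj: "inj_on y {a..b}" by (metis inj_on_inverseI xy)
  have der: "(y has_field_derivative y' s) (at s within {a..b})" for s
    using yd has_field_derivative_at_within by blast
  have fi: "set_integrable lborel {y a..y b} f" by (rule loc_set_int[OF f])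
  define B where "B = integral {y a..y b} f"
  have "f absolutely_integrable_on (y ` {a..b}) \<and> integral (y ` {a..b}) f = B"
    unfolding img B_def using lborel_to_lebesgue[OF fi] by simp
  then have L: "(\<lambda>s. \<bar>y' s\<bar> * f (y s)) absolutely_integrable_on {a..b} \<and> integral {a..b} (\<lambda>s. \<bar>y' s\<bar> * f (y s)) = B"
    using has_absolute_integral_change_of_variables_1'[OF _ der inj, of f B] by simp
  have ycont: "isCont y s" for s using yd DERIV_isCont by blast
  have fm: "f \<in> borel_measurable borel" using f by (simp add: loc_def)
  have m: "(\<lambda>s. \<bar>y' s\<bar> * f (y s)) \<in> borel_measurable borel"
    using fm cont_meas[OF yc] cont_meas[OF ycont] by measurable
  have si: "set_integrable lborel {a..b} (\<lambda>s. \<bar>y' s\<bar> * f (y s))"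
    by (rule lebesgue_to_lborel) (use L m in auto)
  have "(LBINT s=a..b. f (y s) * y' s) = (LBINT s=a..b. \<bar>y' s\<bar> * f (y s))"
    using ypos by (simp add: abs_of_pos mult.commute)
  also have "\<dots> = integral {a..b} (\<lambda>s. \<bar>y' s\<bar> * f (y s))"
    by (rule interval_integral_eq_integral[OF ab si])
  also have "\<dots> = B" using L by simp
  also have "\<dots> = (LBINT t=y a..y b. f t)" unfolding B_def
    by (rule interval_integral_eq_integral[symmetric, OF ymono fi])
  finally show ?thesis by simp
qed

lemma cov_UNIV:
  fixes x X' f :: "real \<Rightarrow> real"
  assumes xd: "\<And>t. (x has_real_derivative X' t) (at t)" and Xpos: "\<And>t. X' t > 0"
    and inj: "inj x" and surj: "surj x"
    and fm: "f \<in> borel_measurable borel" and gm: "(\<lambda>t. X' t * f (x t)) \<in> borel_measurable borel"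
  shows "integrable lborel (\<lambda>t. X' t * f (x t)) \<longleftrightarrow> integrable lborel f"
    and "integrable lborel f \<Longrightarrow> (\<integral>t. f t \<partial>lborel) = (\<integral>t. X' t * f (x t) \<partial>lborel)"
proof -
  have der: "(x has_field_derivative X' s) (at s within UNIV)" for s using xd by simp
  have E: "(\<lambda>t. \<bar>X' t\<bar> * f (x t)) absolutely_integrable_on UNIV \<and> integral UNIV (\<lambda>t. \<bar>X' t\<bar> * f (x t)) = B
     \<longleftrightarrow> f absolutely_integrable_on UNIV \<and> integral UNIV f = B" for B
    using has_absolute_integral_change_of_variables_1'[OF _ der inj, of f B] surj by simp
  have ab: "\<bar>X' t\<bar> = X' t" for t using Xpos[of t] by simp
  have ai: "g absolutely_integrable_on UNIV \<longleftrightarrow> integrable lborel g" if "g \<in> borel_measurable borel" for g :: "real \<Rightarrow> real"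
    using that unfolding set_integrable_def by (simp add: integrable_completion)
  have ie: "integral UNIV g = (\<integral>t. g t \<partial>lborel)" if "integrable lborel g" for g :: "real \<Rightarrow> real"
  proof -
    have "set_integrable lborel UNIV g" using that by (simp add: set_integrable_def)
    from set_borel_integral_eq_integral(2)[OF this] show ?thesis by (simp add: set_lebesgue_integral_def)
  qed
  have E': "(\<lambda>t. X' t * f (x t)) absolutely_integrable_on UNIV \<and> integral UNIV (\<lambda>t. X' t * f (x t)) = B
     \<longleftrightarrow> f absolutely_integrable_on UNIV \<and> integral UNIV f = B" for B
    using E[of B] by (simp only: ab)
  show 1: "integrable lborel (\<lambda>t. X' t * f (x t)) \<longleftrightarrow> integrable lborel f"
  proof
    assume "integrable lborel (\<lambda>t. X' t * f (x t))"
    then have "(\<lambda>t. X' t * f (x t)) absolutely_integrable_on UNIV" using ai[OF gm] by blast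
    then have "f absolutely_integrable_on UNIV" using E'[of "integral UNIV (\<lambda>t. X' t * f (x t))"] by blast
    then show "integrable lborel f" using ai[OF fm] by blast
  next
    assume "integrable lborel f"
    then have "f absolutely_integrable_on UNIV" using ai[OF fm] by blast
    then have "(\<lambda>t. X' t * f (x t)) absolutely_integrable_on UNIV" using E'[of "integral UNIV f"] by blast
    then show "integrable lborel (\<lambda>t. X' t * f (x t))" using ai[OF gm] by blast
  qed
  assume fi: "integrable lborel f"
  then have gi: "integrable lborel (\<lambda>t. X' t * f (x t))" using 1 by simp
  have "integral UNIV (\<lambda>t. X' t * f (x t)) = integral UNIV f"
    using E'[of "integral UNIV f"] ai[OF fm] fi by blast
  then show "(\<integral>t. f t \<partial>lborel) = (\<integral>t. X' t * f (x t) \<partial>lborel)" using ie[OF fi] ie[OF gi] by simp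
qed

lemma AE_image_transfer:
  fixes x y p P :: "real \<Rightarrow> real"
  assumes xd: "\<And>t. x differentiable (at t)" and xy: "\<And>s. x (y s) = s"
    and ae: "AE t in lborel. p t = P t"
  shows "AE s in lborel. p (y s) = P (y s)"
proof -
  obtain N where N0: "{t \<in> space lborel. \<not> p t = P t} \<subseteq> N" "emeasure lborel N = 0" "N \<in> sets lborel"
    by (rule AE_E[OF ae])
  have N: "N \<in> null_sets lborel" "{t \<in> space lborel. \<not> p t = P t} \<subseteq> N" using N0 by (auto intro: null_setsI)
  have "N \<in> null_sets lebesgue" using N(1) null_sets_completionI by blast
  then have "negligible N" by (simp add: negligible_iff_null_sets)
  moreover have "x differentiable_on N" using xd by (simp add: differentiable_at_imp_differentiable_on)
  ultimately have "negligible (x ` N)" by (intro negligible_differentiable_image_negligible) auto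
  then have nl: "x ` N \<in> null_sets lebesgue" by (simp add: negligible_iff_null_sets)
  have "AE s in lebesgue. p (y s) = P (y s)"
  proof (rule AE_I'[OF nl])
    show "{s \<in> space lebesgue. \<not> p (y s) = P (y s)} \<subseteq> x ` N"
    proof
      fix s assume "s \<in> {s \<in> space lebesgue. \<not> p (y s) = P (y s)}"
      then have "y s \<in> N" using N(2) by auto
      then show "s \<in> x ` N" using xy[of s] by (metis image_eqI)
    qed
  qed
  then show ?thesis by (simp add: AE_completion_iff)
qed




lemma L2_meas: "L2 f \<Longrightarrow> f \<in> borel_measurable lborel" by (simp add: L2_def)

lemma H2_norm_char:
  assumes w: "H2_witness f g h"
  shows "H2_norm f = sqrt ((\<integral>t. (f t)\<^sup>2 \<partial>lborel) + (\<integral>t. (g t)\<^sup>2 \<partial>lborel) + (\<integral>t. (h t)\<^sup>2 \<partial>lborel))"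
proof -
  define W where "W = (SOME (g, h). H2_witness f g h)"
  have "\<exists>w. (\<lambda>(g, h). H2_witness f g h) w" using w by auto
  then have "(\<lambda>(g, h). H2_witness f g h) W" unfolding W_def by (rule someI_ex)
  then have w2: "H2_witness f (fst W) (snd W)" by (simp add: case_prod_beta)
  have L: "L2 f" "L2 g" "L2 h" "weak_deriv f g" "weak_deriv g h" using w by (auto simp: H2_witness_def)
  have L': "L2 (fst W)" "L2 (snd W)" "weak_deriv f (fst W)" "weak_deriv (fst W) (snd W)"
    using w2 by (auto simp: H2_witness_def)
  have ae1: "AE t in lborel. fst W t = g t"
    by (rule weak_deriv_unique[OF L'(3) L(4)]) (auto intro: L2_loc L L')
  have "weak_deriv (fst W) h"
    by (rule weak_deriv_AE[OF L(5)]) (use L2_meas[OF L'(1)] L2_meas[OF L(3)] ae1 in auto)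
  then have ae2: "AE t in lborel. snd W t = h t"
    by (intro weak_deriv_unique[OF L'(4)]) (auto intro: L2_loc L L')
  have "(\<integral>t. (fst W t)\<^sup>2 \<partial>lborel) = (\<integral>t. (g t)\<^sup>2 \<partial>lborel)"
    by (rule integral_cong_AE) (use ae1 L2_meas[OF L'(1)] L2_meas[OF L(2)] in auto)
  moreover have "(\<integral>t. (snd W t)\<^sup>2 \<partial>lborel) = (\<integral>t. (h t)\<^sup>2 \<partial>lborel)"
    by (rule integral_cong_AE) (use ae2 L2_meas[OF L'(2)] L2_meas[OF L(3)] in auto)
  ultimately show ?thesis unfolding H2_norm_def W_def[symmetric] by (simp add: case_prod_beta Let_def)
qed

lemma Gf_deriv:
  fixes z :: real
  assumes "\<bar>z\<bar> < 1"
  shows "((\<lambda>z. z / sqrt (1 - z\<^sup>2)) has_real_derivative 1 / (sqrt (1 - z\<^sup>2))^3) (at z)"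
proof -
  have pos: "1 - z\<^sup>2 > 0" using abs_square_less_1[of z] assms by simp
  define s where "s = sqrt (1 - z\<^sup>2)"
  have s: "s > 0" "s\<^sup>2 = 1 - z\<^sup>2" using pos by (auto simp: s_def)
  have d1: "((\<lambda>z. 1 - z\<^sup>2) has_real_derivative - (2*z)) (at z)" by (auto intro!: derivative_eq_intros)
  have d2: "((\<lambda>z. sqrt (1 - z\<^sup>2)) has_real_derivative inverse (sqrt (1 - z\<^sup>2)) / 2 * (- (2*z))) (at z)"
    using DERIV_chain2[OF DERIV_real_sqrt[OF pos] d1] .
  have d3: "((\<lambda>z. z / sqrt (1 - z\<^sup>2)) has_real_derivative
      (1 * s - z * (inverse s / 2 * (- (2*z)))) / (s * s)) (at z)"
    using DERIV_divide[OF DERIV_ident d2] s unfolding s_def by simp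
  have "(1 * s - z * (inverse s / 2 * (- (2*z)))) / (s * s) = 1 / s^3"
  proof -
    have "(1 * s - z * (inverse s / 2 * (- (2*z)))) = (s\<^sup>2 + z\<^sup>2) / s"
      using s by (simp add: field_simps power2_eq_square)
    also have "\<dots> = 1 / s" using s by simp
    finally show ?thesis using s by (simp add: field_simps power2_eq_square power3_eq_cube)
  qed
  with d3 show ?thesis by (simp add: s_def)
qed




lemma main_core:
  fixes p q x y :: "real \<Rightarrow> real" and x0 qc :: real
  assumes qc0: "0 < qc" and qc1: "qc < 1"
    and Hq: "H1 q" and Hp: "H2 p" and wpq: "weak_deriv p q"
    and qb: "AE s in lborel. \<bar>q s\<bar> \<le> qc"
    and xdef: "\<And>s. x s = x0 + (LBINT t=0..s. sqrt (1 - (q t)\<^sup>2))"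
    and xy: "\<And>s. x (y s) = s"
  defines "m \<equiv> sqrt (1 - qc\<^sup>2)"
  shows "H2 (\<lambda>s. p (y s)) \<and> sqrt m * H2_norm p \<le> H2_norm (\<lambda>s. p (y s))
         \<and> H2_norm (\<lambda>s. p (y s)) \<le> 1 / m^4 * H2_norm p"
proof -
  have qc2: "qc\<^sup>2 < 1" using qc0 qc1 by (simp add: power_less_one_iff abs_square_less_1)
  have m0: "m > 0" "m \<le> 1" unfolding m_def using qc2 by auto
  obtain r where Lr: "L2 r" and wqr: "weak_deriv q r" using Hq by (auto simp: H1_def)
  have Lq: "L2 q" using Hq by (simp add: H1_def)
  obtain g0 h0 where "H2_witness p g0 h0" using Hp by (auto simp: H2_def)
  then have Lp: "L2 p" by (simp add: H2_witness_def)
  have lp: "loc p" and lq: "loc q" and lr: "loc r" using Lp Lq Lr by (auto intro: L2_loc)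
  have pm[measurable]: "p \<in> borel_measurable borel" and qm[measurable]: "q \<in> borel_measurable borel"
    and rm[measurable]: "r \<in> borel_measurable borel"
    using Lp Lq Lr by (auto simp: L2_def)
  obtain d where qQ0: "AE t in lborel. q t = d + (LBINT s=0..t. r s)" using weak_deriv_rep[OF wqr lq lr] by blast
  define Q where "Q t = d + (LBINT s=0..t. r s)" for t :: real
  have qQ: "AE t in lborel. q t = Q t" using qQ0 by (simp add: Q_def)
  have Qc: "isCont Q t" for t unfolding Q_def by (intro continuous_intros Gfun_cont[OF lr])
  have Qm[measurable]: "Q \<in> borel_measurable borel" by (rule cont_meas[OF Qc])
  have Qdef: "Q v - Q u = (LBINT t=u..v. r t)" for u v :: real
    using loc_sum[OF lr, of 0 u v] by (simp add: Q_def zero_ereal_def)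
  have Qb: "\<bar>Q t\<bar> \<le> qc" for t
  proof (rule cont_AE_bound[OF Qc])
    show "AE t in lborel. \<bar>Q t\<bar> \<le> qc" using qQ qb by eventually_elim simp
  qed
  have Q2: "(Q t)\<^sup>2 \<le> qc\<^sup>2" for t using power_mono[OF Qb[of t] abs_ge_zero, of 2] by simp
  obtain c where pP0: "AE t in lborel. p t = c + (LBINT s=0..t. q s)" using weak_deriv_rep[OF wpq lp lq] by blast
  define P where "P t = c + (LBINT s=0..t. Q s)" for t :: real
  have intqQ: "(LBINT s=0..t. q s) = (LBINT s=0..t. Q s)" for t :: real
    by (rule interval_integral_cong_AE) (use qQ in auto)
  have pP: "AE t in lborel. p t = P t" using pP0 by (simp add: P_def intqQ)
  have Pd: "(P has_real_derivative Q t) (at t)" for t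
  proof -
    have "((\<lambda>u. LBINT s=0..u. Q s) has_real_derivative Q t) (at t)"
      using prim_deriv[OF Qc, of 0 t] by (simp add: zero_ereal_def)
    then show ?thesis unfolding P_def[abs_def] by (auto intro!: derivative_eq_intros)
  qed
  define X' where "X' t = sqrt (1 - (Q t)\<^sup>2)" for t
  have X'c: "isCont X' t" for t unfolding X'_def by (intro continuous_intros Qc)
  have X'b: "m \<le> X' t" "X' t \<le> 1" for t
    using Q2[of t] unfolding X'_def m_def by auto
  have X'pos: "X' t > 0" for t using X'b(1)[of t] m0 by linarith
  have xeq: "x s = x0 + (LBINT t=0..s. X' t)" for s :: real
  proof -
    have "(LBINT t=0..s. sqrt (1 - (q t)\<^sup>2)) = (LBINT t=0..s. X' t)"
      by (rule interval_integral_cong_AE) (use qQ cont_meas[OF X'c] in \<open>auto simp: X'_def\<close>)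
    then show ?thesis using xdef by simp
  qed
  have xd: "(x has_real_derivative X' t) (at t)" for t
  proof -
    have "((\<lambda>u. LBINT s=0..u. X' s) has_real_derivative X' t) (at t)"
      using prim_deriv[OF X'c, of 0 t] by (simp add: zero_ereal_def)
    then have "((\<lambda>u. x0 + (LBINT s=0..u. X' s)) has_real_derivative X' t) (at t)"
      by (auto intro!: derivative_eq_intros)
    moreover have "x = (\<lambda>u. x0 + (LBINT s=0..u. X' s))" using xeq by auto
    ultimately show ?thesis by simp
  qed
  have xc: "isCont x t" for t using xd DERIV_isCont by blast
  have xinc: "x t1 < x t2" if "t1 < t2" for t1 t2
    by (rule DERIV_pos_imp_increasing[OF that]) (use xd X'pos in blast)
  have xmono: "x t1 \<le> x t2" if "t1 \<le> t2" for t1 t2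
    using xinc[of t1 t2] that by (cases "t1 = t2") auto
  have injx: "inj x" by (metis injI linorder_neq_iff xinc less_irrefl)
  have yx: "y (x t) = t" for t using injx xy by (metis injD)
  have surjx: "surj x" by (metis surjI xy)
  have yc: "isCont y s" for s
  proof -
    have "isCont y (x (y s))"
      by (rule isCont_inverse_function[where d=1]) (auto simp: yx xc)
    then show ?thesis by (simp add: xy)
  qed
  define y' where "y' s = 1 / X' (y s)" for s
  have yd: "(y has_real_derivative y' s) (at s)" for s
  proof -
    have "(y has_real_derivative inverse (X' (y s))) (at s)"
      by (rule DERIV_inverse_function[where f=x and a="s - 1" and b="s + 1"])
         (use xd X'pos xy yc in \<open>auto simp: less_imp_neq[symmetric]\<close>)
    then show ?thesis by (simp add: y'_def divide_inverse)
  qed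
  have y'c: "isCont y' s" for s
    unfolding y'_def using X'pos by (intro continuous_intros continuous_at_compose[OF yc, unfolded o_def] X'c) (auto simp: less_imp_neq[symmetric])
  have y'pos: "y' s > 0" for s using X'pos by (simp add: y'_def)
  have ym[measurable]: "y \<in> borel_measurable borel" by (rule cont_meas[OF yc])
  have X'm[measurable]: "X' \<in> borel_measurable borel" by (rule cont_meas[OF X'c])
  have xdiff: "x differentiable (at t)" for t using xd real_differentiable_def by blast
  define U where "U s = P (y s)" for s
  define V where "V s = Q (y s) / X' (y s)" for s
  have Vc: "isCont V s" for s unfolding V_def using X'pos
    by (intro continuous_intros continuous_at_compose[OF yc, unfolded o_def] X'c Qc) (auto simp: less_imp_neq[symmetric])
  have Vm[measurable]: "V \<in> borel_measurable borel" by (rule cont_meas[OF Vc])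
  have Ud: "(U has_real_derivative V s) (at s)" for s
    using DERIV_chain2[OF Pd yd] unfolding U_def[abs_def] by (simp add: V_def y'_def)
  have Ueq: "U s = U 0 + (LBINT t=0..s. V t)" for s :: real
  proof -
    have "(LBINT t=0..s. V t) = U s - U 0"
      using interval_integral_FTC_finite[of 0 s V U] Vc Ud
      by (simp add: zero_ereal_def continuous_at_imp_continuous_on has_real_derivative_iff_has_vector_derivative[symmetric] has_field_derivative_at_within)
    then show ?thesis by simp
  qed
  have lV: "loc V" by (rule cont_loc[OF Vc])
  have wUV: "weak_deriv U V"
  proof -
    have "(\<lambda>t. U 0 + (LBINT s=0..t. V s)) = U" by (intro ext) (rule Ueq[symmetric])
    then show ?thesis using weak_deriv_prim[OF lV, of "U 0"] by simp
  qed
  have uU: "AE s in lborel. p (y s) = U s" unfolding U_def by (rule AE_image_transfer[OF xdiff xy pP])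
  have pym: "(\<lambda>s. p (y s)) \<in> borel_measurable lborel" by measurable
  have Vml: "V \<in> borel_measurable lborel" by measurable
  have wuV: "weak_deriv (\<lambda>s. p (y s)) V"
  proof (rule weak_deriv_AE[OF wUV pym Vml])
    show "AE t in lborel. U t = p (y t)" using uU by eventually_elim simp
  qed simp
  define Gd where "Gd z = 1 / (sqrt (1 - z\<^sup>2))^3" for z :: real
  have Gder: "((\<lambda>z. z / sqrt (1 - z\<^sup>2)) has_real_derivative Gd z) (at z)" if "\<bar>z\<bar> < 1" for z
    unfolding Gd_def by (rule Gf_deriv[OF that])
  have Gdc: "isCont Gd z" if "\<bar>z\<bar> < 1" for z
  proof -
    have "1 - z\<^sup>2 > 0" using abs_square_less_1[of z] that by simp
    then show ?thesis unfolding Gd_def by (intro continuous_intros) auto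
  qed
  have GdQ: "Gd (Q t) = 1 / (X' t)^3" for t by (simp add: Gd_def X'_def)
  have VG: "V s = Q (y s) / sqrt (1 - (Q (y s))\<^sup>2)" for s by (simp add: V_def X'_def)
  define f0 where "f0 t = Gd (Q t) * r t" for t
  have GQc: "isCont (\<lambda>t. Gd (Q t)) t" for t
    using Qb qc1 by (intro continuous_at_compose[OF Qc, unfolded o_def] Gdc) (meson le_less_trans)
  have lf0: "loc f0" unfolding f0_def by (rule loc_mult_cont[OF lr GQc])
  have chain: "(\<lambda>z. z / sqrt (1 - z\<^sup>2)) (Q b) - (\<lambda>z. z / sqrt (1 - z\<^sup>2)) (Q a) = (LBINT t=a..b. f0 t)"
    if "a \<le> b" for a b :: real
    unfolding f0_def by (rule ac_chain[OF lr Qdef Qc Qb qc1 Gder Gdc that])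
  define W where "W s = f0 (y s) * y' s" for s
  have Vint: "V s - V 0 = (LBINT t=0..s. W t)" for s :: real
  proof (cases "0 \<le> s")
    case True
    have "y 0 \<le> y s" by (rule ymono_gen[OF yd y'pos True])
    have "V s - V 0 = (LBINT t=y 0..y s. f0 t)" unfolding VG using chain[OF \<open>y 0 \<le> y s\<close>] by simp
    also have "\<dots> = (LBINT t=0..s. W t)"
      using subst_prim[OF lf0 yd y'pos y'c xy yx xmono True] by (simp add: W_def zero_ereal_def)
    finally show ?thesis .
  next
    case False
    then have s0: "s \<le> 0" by simp
    have "y s \<le> y 0" by (rule ymono_gen[OF yd y'pos s0])
    have "V 0 - V s = (LBINT t=y s..y 0. f0 t)" unfolding VG using chain[OF \<open>y s \<le> y 0\<close>] by simp
    also have "\<dots> = (LBINT t=s..0. W t)"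
      using subst_prim[OF lf0 yd y'pos y'c xy yx xmono s0] by (simp add: W_def zero_ereal_def)
    finally have "V 0 - V s = (LBINT t=s..0. W t)" .
    then show ?thesis using interval_integral_endpoints_reverse[of 0 s W] by (simp add: zero_ereal_def)
  qed
  have Pc: "isCont P t" for t using Pd DERIV_isCont by blast
  have Pm[measurable]: "P \<in> borel_measurable borel" by (rule cont_meas[OF Pc])
  have y'm[measurable]: "y' \<in> borel_measurable borel" by (rule cont_meas[OF y'c])
  have GQm[measurable]: "(\<lambda>t. Gd (Q t)) \<in> borel_measurable borel" by (rule cont_meas[OF GQc])
  have Um[measurable]: "U \<in> borel_measurable borel" unfolding U_def by measurable
  have Wm[measurable]: "W \<in> borel_measurable borel" unfolding W_def f0_def by measurable
  have Ux: "U (x t) = P t" for t by (simp add: U_def yx)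
  have Vx: "V (x t) = Q t / X' t" for t by (simp add: V_def yx)
  have Wx: "W (x t) = r t / (X' t)^4" for t
    by (simp add: W_def f0_def yx y'_def GdQ field_simps power_eq_if)
  have iP: "integrable lborel (\<lambda>t. (P t)\<^sup>2)"
  proof -
    have "integrable lborel (\<lambda>t. (p t)\<^sup>2)" using Lp by (simp add: L2_def)
    then show ?thesis by (rule integrable_cong_AE_imp) (use pP in \<open>auto\<close>)
  qed
  have iQ: "integrable lborel (\<lambda>t. (Q t)\<^sup>2)"
  proof -
    have "integrable lborel (\<lambda>t. (q t)\<^sup>2)" using Lq by (simp add: L2_def)
    then show ?thesis by (rule integrable_cong_AE_imp) (use qQ in \<open>auto\<close>)
  qed
  have ir: "integrable lborel (\<lambda>t. (r t)\<^sup>2)" using Lr by (simp add: L2_def)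
  have eP: "(\<integral>t. (p t)\<^sup>2 \<partial>lborel) = (\<integral>t. (P t)\<^sup>2 \<partial>lborel)"
    by (rule integral_cong_AE) (use pP in auto)
  have eQ: "(\<integral>t. (q t)\<^sup>2 \<partial>lborel) = (\<integral>t. (Q t)\<^sup>2 \<partial>lborel)"
    by (rule integral_cong_AE) (use qQ in auto)
  have X'le: "X' t * z \<le> z" "m * z \<le> X' t * z" if "z \<ge> 0" for t z
  proof -
    show "X' t * z \<le> z" using X'b[of t] X'pos[of t] that by (intro mult_left_le_one_le) auto
    show "m * z \<le> X' t * z" using X'b[of t] that by (intro mult_right_mono) auto
  qed
  have invX: "1 \<le> 1 / (X' t)^k" "1 / (X' t)^k \<le> 1 / m^k" for t k
  proof -
    have "(X' t)^k \<le> 1" "0 < (X' t)^k" using X'b[of t] X'pos[of t] by (auto intro: power_le_one)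
    then show "1 \<le> 1 / (X' t)^k" by simp
    have "m^k \<le> (X' t)^k" using X'b[of t] m0 by (intro power_mono) auto
    then show "1 / (X' t)^k \<le> 1 / m^k" using m0 X'pos[of t] by (intro divide_left_mono) auto
  qed
  have gU: "(\<lambda>t. X' t * (U (x t))\<^sup>2) = (\<lambda>t. X' t * (P t)\<^sup>2)" by (simp add: Ux)
  have iXP: "integrable lborel (\<lambda>t. X' t * (P t)\<^sup>2)"
    by (rule Bochner_Integration.integrable_bound[OF iP]) (use X'pos in \<open>auto simp: abs_mult intro!: X'le(1) AE_I2 simp: abs_of_pos\<close>)
  have cU: "integrable lborel (\<lambda>t. (U t)\<^sup>2) \<and> (\<integral>t. (U t)\<^sup>2 \<partial>lborel) = (\<integral>t. X' t * (P t)\<^sup>2 \<partial>lborel)"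
    using cov_UNIV[OF xd X'pos injx surjx, of "\<lambda>t. (U t)\<^sup>2"] iXP unfolding gU by auto
  have gV: "(\<lambda>t. X' t * (V (x t))\<^sup>2) = (\<lambda>t. (Q t)\<^sup>2 * (1 / (X' t)^1))"
    using X'pos by (auto simp: Vx power2_eq_square field_simps intro!: ext)
  have iXV: "integrable lborel (\<lambda>t. (Q t)\<^sup>2 * (1 / (X' t)^1))"
  proof (rule Bochner_Integration.integrable_bound[OF integrable_mult_right[OF iQ, of "1 / m^1"]])
    show "AE t in lborel. norm ((Q t)\<^sup>2 * (1 / X' t ^ 1)) \<le> norm (1 / m ^ 1 * (Q t)\<^sup>2)"
    proof (rule AE_I2)
      fix t
      have e1: "norm ((Q t)\<^sup>2 * (1 / X' t ^ 1)) = (Q t)\<^sup>2 * (1 / X' t ^ 1)"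
        using X'pos[of t] by (simp add: abs_mult abs_of_pos)
      have e2: "norm (1 / m ^ 1 * (Q t)\<^sup>2) = (Q t)\<^sup>2 * (1 / m ^ 1)"
        using m0 by (simp add: abs_mult abs_of_pos)
      show "norm ((Q t)\<^sup>2 * (1 / X' t ^ 1)) \<le> norm (1 / m ^ 1 * (Q t)\<^sup>2)"
        unfolding e1 e2 by (rule mult_left_mono[OF invX(2)]) simp
    qed
  qed simp
  have cV: "integrable lborel (\<lambda>t. (V t)\<^sup>2) \<and> (\<integral>t. (V t)\<^sup>2 \<partial>lborel) = (\<integral>t. (Q t)\<^sup>2 * (1 / (X' t)^1) \<partial>lborel)"
    using cov_UNIV[OF xd X'pos injx surjx, of "\<lambda>t. (V t)\<^sup>2"] iXV unfolding gV by auto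
  have gW: "(\<lambda>t. X' t * (W (x t))\<^sup>2) = (\<lambda>t. (r t)\<^sup>2 * (1 / (X' t)^7))"
    using X'pos by (auto simp: Wx power2_eq_square field_simps power_eq_if intro!: ext)
  have iXW: "integrable lborel (\<lambda>t. (r t)\<^sup>2 * (1 / (X' t)^7))"
  proof (rule Bochner_Integration.integrable_bound[OF integrable_mult_right[OF ir, of "1 / m^7"]])
    show "AE t in lborel. norm ((r t)\<^sup>2 * (1 / X' t ^ 7)) \<le> norm (1 / m ^ 7 * (r t)\<^sup>2)"
    proof (rule AE_I2)
      fix t
      have e1: "norm ((r t)\<^sup>2 * (1 / X' t ^ 7)) = (r t)\<^sup>2 * (1 / X' t ^ 7)"
        using X'pos[of t] by (simp add: abs_mult abs_of_pos)
      have e2: "norm (1 / m ^ 7 * (r t)\<^sup>2) = (r t)\<^sup>2 * (1 / m ^ 7)"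
        using m0 by (simp add: abs_mult abs_of_pos)
      show "norm ((r t)\<^sup>2 * (1 / X' t ^ 7)) \<le> norm (1 / m ^ 7 * (r t)\<^sup>2)"
        unfolding e1 e2 by (rule mult_left_mono[OF invX(2)]) simp
    qed
  qed simp
  have cW: "integrable lborel (\<lambda>t. (W t)\<^sup>2) \<and> (\<integral>t. (W t)\<^sup>2 \<partial>lborel) = (\<integral>t. (r t)\<^sup>2 * (1 / (X' t)^7) \<partial>lborel)"
    using cov_UNIV[OF xd X'pos injx surjx, of "\<lambda>t. (W t)\<^sup>2"] iXW unfolding gW by auto
  have pym2: "(\<lambda>s. (p (y s))\<^sup>2) \<in> borel_measurable lborel" by measurable
  have Um2: "(\<lambda>s. (U s)\<^sup>2) \<in> borel_measurable lborel" by measurable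
  have uU2: "AE s in lborel. (U s)\<^sup>2 = (p (y s))\<^sup>2" using uU by eventually_elim simp
  have iu: "integrable lborel (\<lambda>s. (p (y s))\<^sup>2)"
    by (rule integrable_cong_AE_imp[OF conjunct1[OF cU] pym2 uU2])
  have eu: "(\<integral>t. (p (y t))\<^sup>2 \<partial>lborel) = (\<integral>t. (U t)\<^sup>2 \<partial>lborel)"
    by (rule integral_cong_AE[OF pym2 Um2]) (use uU in \<open>eventually_elim, simp\<close>)
  have Lu: "L2 (\<lambda>s. p (y s))" using iu pym unfolding L2_def by blast
  have Wml: "W \<in> borel_measurable lborel" by measurable
  have LV: "L2 V" using cV Vml unfolding L2_def by blast
  have LW: "L2 W" using cW Wml unfolding L2_def by blast
  have wVW: "weak_deriv V W"
  proof -
    have "(\<lambda>t. V 0 + (LBINT s=0..t. W s)) = V"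
    proof (rule ext)
      fix t show "V 0 + (LBINT s=0..t. W s) = V t" using Vint[of t] by linarith
    qed
    then show ?thesis using weak_deriv_prim[OF L2_loc[OF LW], of "V 0"] by simp
  qed
  have witu: "H2_witness (\<lambda>s. p (y s)) V W" using Lu LV LW wuV wVW by (simp add: H2_witness_def)
  have witp: "H2_witness p q r" using Lp Lq Lr wpq wqr by (simp add: H2_witness_def)
  define A1 where "A1 = (\<integral>t. (P t)\<^sup>2 \<partial>lborel)"
  define A2 where "A2 = (\<integral>t. (Q t)\<^sup>2 \<partial>lborel)"
  define A3 where "A3 = (\<integral>t. (r t)\<^sup>2 \<partial>lborel)"
  define B1 where "B1 = (\<integral>t. X' t * (P t)\<^sup>2 \<partial>lborel)"
  define B2 where "B2 = (\<integral>t. (Q t)\<^sup>2 * (1 / (X' t)^1) \<partial>lborel)"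
  define B3 where "B3 = (\<integral>t. (r t)\<^sup>2 * (1 / (X' t)^7) \<partial>lborel)"
  have Np: "H2_norm p = sqrt (A1 + A2 + A3)"
    using H2_norm_char[OF witp] eP eQ by (simp add: A1_def A2_def A3_def)
  have Nu: "H2_norm (\<lambda>s. p (y s)) = sqrt (B1 + B2 + B3)"
    using H2_norm_char[OF witu] eu cU cV cW by (simp add: B1_def B2_def B3_def)
  have A0: "A1 \<ge> 0" "A2 \<ge> 0" "A3 \<ge> 0" by (auto simp: A1_def A2_def A3_def)
  have b1: "m * A1 \<le> B1" "B1 \<le> A1"
  proof -
    have "(\<integral>t. m * (P t)\<^sup>2 \<partial>lborel) \<le> B1" unfolding B1_def
      by (rule integral_mono) (use iP iXP X'le(2) in auto)
    then show "m * A1 \<le> B1" by (simp add: A1_def)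
    show "B1 \<le> A1" unfolding B1_def A1_def
      by (rule integral_mono) (use iP iXP X'le(1) in auto)
  qed
  have b2: "A2 \<le> B2" "B2 \<le> A2 / m"
  proof -
    show "A2 \<le> B2" unfolding B2_def A2_def
    proof (rule integral_mono[OF iQ iXV])
      fix t show "(Q t)\<^sup>2 \<le> (Q t)\<^sup>2 * (1 / X' t ^ 1)"
        using mult_left_mono[OF invX(1)[of t 1], of "(Q t)\<^sup>2"] by simp
    qed
    have "B2 \<le> (\<integral>t. 1 / m^1 * (Q t)\<^sup>2 \<partial>lborel)" unfolding B2_def
    proof (rule integral_mono[OF iXV integrable_mult_right[OF iQ]])
      fix t show "(Q t)\<^sup>2 * (1 / X' t ^ 1) \<le> 1 / m^1 * (Q t)\<^sup>2"
        using mult_left_mono[OF invX(2)[of t 1], of "(Q t)\<^sup>2"] by (simp add: mult.commute)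
    qed
    then show "B2 \<le> A2 / m" by (simp add: A2_def)
  qed
  have b3: "A3 \<le> B3" "B3 \<le> A3 / m^7"
  proof -
    show "A3 \<le> B3" unfolding B3_def A3_def
    proof (rule integral_mono[OF ir iXW])
      fix t show "(r t)\<^sup>2 \<le> (r t)\<^sup>2 * (1 / X' t ^ 7)"
        using mult_left_mono[OF invX(1)[of t 7], of "(r t)\<^sup>2"] by simp
    qed
    have "B3 \<le> (\<integral>t. 1 / m^7 * (r t)\<^sup>2 \<partial>lborel)" unfolding B3_def
    proof (rule integral_mono[OF iXW integrable_mult_right[OF ir]])
      fix t show "(r t)\<^sup>2 * (1 / X' t ^ 7) \<le> 1 / m^7 * (r t)\<^sup>2"
        using mult_left_mono[OF invX(2)[of t 7], of "(r t)\<^sup>2"] by (simp add: mult.commute)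
    qed
    then show "B3 \<le> A3 / m^7" by (simp add: A3_def)
  qed
  have low: "m * (A1 + A2 + A3) \<le> B1 + B2 + B3"
  proof -
    have "m * A2 \<le> A2" "m * A3 \<le> A3" using m0 A0 by (auto intro: mult_left_le_one_le)
    then show ?thesis using b1 b2 b3 by (simp add: algebra_simps)
  qed
  have up: "B1 + B2 + B3 \<le> (A1 + A2 + A3) / m^8"
  proof -
    have m7: "m^7 \<le> 1" "m^8 \<le> 1" using m0 by (auto intro: power_le_one)
    have p8: "m^8 \<le> m" "m^8 \<le> m^7"
    proof -
      have "m^7 * m \<le> 1 * m" by (rule mult_right_mono[OF m7(1)]) (use m0 in simp)
      then show "m^8 \<le> m" by (simp add: power_Suc2[symmetric] del: power_Suc)
      have "m * m^7 \<le> 1 * m^7" by (rule mult_right_mono[OF m0(2)]) (use m0 in simp)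
      then show "m^8 \<le> m^7" by (simp add: power_Suc[symmetric] del: power_Suc)
    qed
    have pm8: "0 < m^8" using m0 by simp
    have "A1 \<le> A1 / m^8" using pos_le_divide_eq[OF pm8] mult_left_mono[OF m7(2) A0(1)] by simp
    moreover have "A2 / m \<le> A2 / m^8" by (rule divide_left_mono[OF p8(1) A0(2)]) (use m0 in simp)
    moreover have "A3 / m^7 \<le> A3 / m^8" by (rule divide_left_mono[OF p8(2) A0(3)]) (use m0 in simp)
    ultimately have "A1 \<le> A1 / m^8" "A2 / m \<le> A2 / m^8" "A3 / m^7 \<le> A3 / m^8" by auto
    then show ?thesis using b1 b2 b3 by (simp add: add_divide_distrib)
  qed
  have H2u: "H2 (\<lambda>s. p (y s))" using witu by (auto simp: H2_def)
  have "sqrt m * H2_norm p = sqrt (m * (A1 + A2 + A3))" by (simp add: Np real_sqrt_mult)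
  also have "\<dots> \<le> H2_norm (\<lambda>s. p (y s))" unfolding Nu using low by simp
  finally have l: "sqrt m * H2_norm p \<le> H2_norm (\<lambda>s. p (y s))" .
  have "H2_norm (\<lambda>s. p (y s)) \<le> sqrt ((A1 + A2 + A3) / m^8)" unfolding Nu using up by simp
  also have "\<dots> = 1 / m^4 * H2_norm p"
  proof -
    have e: "(m^4)\<^sup>2 = m^8" by (simp add: power_mult[symmetric])
    have "sqrt (m^8) = \<bar>m^4\<bar>" using real_sqrt_abs[of "m^4"] unfolding e .
    then have "sqrt (m^8) = m^4" using m0 by simp
    then show ?thesis by (simp add: Np real_sqrt_divide)
  qed
  finally show ?thesis using H2u l by blast
qed

theorem lemma2:
  fixes qc :: real
  assumes "0 < qc" "qc < 1"
  shows "\<exists>Cm Cp :: real. 0 < Cm \<and> 0 < Cp \<and>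
    (\<forall>(p :: real \<Rightarrow> real) (q :: real \<Rightarrow> real) (x :: real \<Rightarrow> real) (y :: real \<Rightarrow> real) (x0 :: real).
       H1 q \<longrightarrow> H2 p \<longrightarrow> weak_deriv p q \<longrightarrow>
       (AE s in lborel. \<bar>q s\<bar> \<le> qc) \<longrightarrow>
       (\<forall>s. x s = x0 + (LBINT t=0..s. sqrt (1 - (q t)\<^sup>2))) \<longrightarrow>
       (\<forall>s. x (y s) = s) \<longrightarrow>
       (let u = (\<lambda>s. p (y s)) in
          H2 u \<and> Cm * H2_norm p \<le> H2_norm u \<and> H2_norm u \<le> Cp * H2_norm p))"
proof -
  define m where "m = sqrt (1 - qc\<^sup>2)"
  have qc2: "qc\<^sup>2 < 1" using assms by (simp add: abs_square_less_1)
  have m0: "m > 0" unfolding m_def using qc2 by simp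
  show ?thesis
  proof (rule exI[of _ "sqrt m"], rule exI[of _ "1 / m^4"], intro conjI allI impI)
    show "0 < sqrt m" using m0 by simp
    show "0 < 1 / m^4" using m0 by simp
    fix p q x y :: "real \<Rightarrow> real" and x0 :: real
    assume a: "H1 q" "H2 p" "weak_deriv p q" "AE s in lborel. \<bar>q s\<bar> \<le> qc"
      "\<forall>s. x s = x0 + (LBINT t=0..s. sqrt (1 - (q t)\<^sup>2))" "\<forall>s. x (y s) = s"
    have "H2 (\<lambda>s. p (y s)) \<and> sqrt m * H2_norm p \<le> H2_norm (\<lambda>s. p (y s))
         \<and> H2_norm (\<lambda>s. p (y s)) \<le> 1 / m^4 * H2_norm p"
    proof -
      have xd: "\<And>s. x s = x0 + (LBINT t=0..s. sqrt (1 - (q t)\<^sup>2))" using a(5) by blast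
      have xy: "\<And>s. x (y s) = s" using a(6) by blast
      show ?thesis using main_core[OF assms a(1-4) xd xy] by (simp add: m_def)
    qed
    then show "let u = (\<lambda>s. p (y s)) in
          H2 u \<and> sqrt m * H2_norm p \<le> H2_norm u \<and> H2_norm u \<le> 1 / m^4 * H2_norm p"
      by (simp add: Let_def)
  qed
qed

end
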